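(* Let $\mathcal{P}=((\mathcal{S},\mathcal{T}),(\mathcal{U},\mathcal{V}))$ be a twin cotorsion pair on a triangulated category $\mathcal{C}$ with associated functor $H\colon\mathcal{C}\to\mathcal{H}/\mathcal{W}$. Then $H(\mathcal{U}*\mathcal{T})=0$; thus $H$ factors through the quotient $\mathcal{C}\to\mathcal{C}/(\mathcal{U}*\mathcal{T})$. In particular $H(\mathcal{U})=H(\mathcal{T})=0$.
   Context: For full subcategories $\mathcal{X},\mathcal{Y}$, $\mathcal{X}*\mathcal{Y}$ is the full subcategory of objects $C$ admitting a distinguished triangle $X\to C\to Y\to X[1]$ with $X\in\mathcal{X}$, $Y\in\mathcal{Y}$. A cotorsion pair $(\mathcal{A},\mathcal{B})$: full subcategories closed under isomorphisms, finite direct sums and summands with $\mathcal{C}=\mathcal{A}*\mathcal{B}[1]$ and $\mathcal{C}(\mathcal{A},\mathcal{B}[1])=0$. A twin cotorsion pair $((\mathcal{S},\mathcal{T}),(\mathcal{U},\mathcal{V}))$: two cotorsion pairs with $\mathcal{C}(\mathcal{S},\mathcal{V}[1])=0$. Associated data: $\mathcal{W}=\mathcal{U}\cap\mathcal{T}$, $\mathcal{C}^+=\mathcal{W}*\mathcal{V}[1]$, $\mathcal{C}^-=\mathcal{S}[-1]*\mathcal{W}$, $\mathcal{H}=\mathcal{C}^+\cap\mathcal{C}^-$; ideal quotients $\mathcal{C}/\mathcal{W}$, $\mathcal{H}/\mathcal{W}$ by morphisms factoring through objects of the given subcategory; $\tau^+$ left adjoint of $\mathcal{C}^+/\mathcal{W}\hookrightarrow\mathcal{C}/\mathcal{W}$,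 $\tau^-$ right adjoint of $\mathcal{C}^-/\mathcal{W}\hookrightarrow\mathcal{C}/\mathcal{W}$; $H$ is the quotient functor followed by $\tau^+\tau^-$. *)

theory Defs
  imports Main
begin

text \<open>A category is given by a set of objects, hom-sets (pairwise disjoint, as in
Mac Lane), composition (cmp g f = g o f), identities. Distinguished triangles
X --f--> Y --g--> Z --h--> X[1] are sextuples (X,Y,Z,f,g,h).\<close>

record ('o, 'm) tricat =
  obj  :: "'o set"
  hom  :: "'o \<Rightarrow> 'o \<Rightarrow> 'm set"
  cmp  :: "'m \<Rightarrow> 'm \<Rightarrow> 'm"
  idm  :: "'o \<Rightarrow> 'm"
  zer  :: "'o \<Rightarrow> 'o \<Rightarrow> 'm"
  pls  :: "'m \<Rightarrow> 'm \<Rightarrow> 'm"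
  ngt  :: "'m \<Rightarrow> 'm"
  sho  :: "'o \<Rightarrow> 'o"
  shm  :: "'m \<Rightarrow> 'm"
  dist :: "('o \<times> 'o \<times> 'o \<times> 'm \<times> 'm \<times> 'm) set"

definition is_iso :: "('o,'m,'x) tricat_scheme \<Rightarrow> 'o \<Rightarrow> 'o \<Rightarrow> 'm \<Rightarrow> bool" where
  "is_iso C X Y f \<longleftrightarrow> f \<in> hom C X Y \<and>
     (\<exists>g \<in> hom C Y X. cmp C g f = idm C X \<and> cmp C f g = idm C Y)"

definition isomorphic :: "('o,'m,'x) tricat_scheme \<Rightarrow> 'o \<Rightarrow> 'o \<Rightarrow> bool" where
  "isomorphic C X Y \<longleftrightarrow> (\<exists>f. is_iso C X Y f)"

definition zero_obj :: "('o,'m,'x) tricat_scheme \<Rightarrow> 'o \<Rightarrow> bool" where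
  "zero_obj C Z \<longleftrightarrow> Z \<in> obj C \<and>
     (\<forall>X \<in> obj C. hom C Z X = {zer C Z X} \<and> hom C X Z = {zer C X Z})"

definition biproduct :: "('o,'m,'x) tricat_scheme \<Rightarrow> 'o \<Rightarrow> 'o \<Rightarrow> 'o
     \<Rightarrow> 'm \<Rightarrow> 'm \<Rightarrow> 'm \<Rightarrow> 'm \<Rightarrow> bool" where
  "biproduct C X Y B i1 i2 p1 p2 \<longleftrightarrow> B \<in> obj C \<and>
     i1 \<in> hom C X B \<and> i2 \<in> hom C Y B \<and> p1 \<in> hom C B X \<and> p2 \<in> hom C B Y \<and>
     cmp C p1 i1 = idm C X \<and> cmp C p2 i2 = idm C Y \<and>
     cmp C p1 i2 = zer C Y X \<and> cmp C p2 i1 = zer C X Y \<and>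
     pls C (cmp C i1 p1) (cmp C i2 p2) = idm C B"

definition additive_category :: "('o,'m,'x) tricat_scheme \<Rightarrow> bool" where
  "additive_category C \<longleftrightarrow>
     (\<forall>X Y. (X \<notin> obj C \<or> Y \<notin> obj C) \<longrightarrow> hom C X Y = {}) \<and>
     (\<forall>X Y X' Y' f. f \<in> hom C X Y \<and> f \<in> hom C X' Y' \<longrightarrow> X = X' \<and> Y = Y') \<and>
     (\<forall>X \<in> obj C. idm C X \<in> hom C X X) \<and>
     (\<forall>X Y Z f g. f \<in> hom C X Y \<and> g \<in> hom C Y Z \<longrightarrow> cmp C g f \<in> hom C X Z) \<and>
     (\<forall>X Y f. f \<in> hom C X Y \<longrightarrow> cmp C (idm C Y) f = f \<and> cmp C f (idm C X) = f) \<and>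
     (\<forall>W X Y Z f g h. f \<in> hom C W X \<and> g \<in> hom C X Y \<and> h \<in> hom C Y Z \<longrightarrow>
        cmp C h (cmp C g f) = cmp C (cmp C h g) f) \<and>
     (\<forall>X \<in> obj C. \<forall>Y \<in> obj C. zer C X Y \<in> hom C X Y) \<and>
     (\<forall>X Y f g. f \<in> hom C X Y \<and> g \<in> hom C X Y \<longrightarrow>
        pls C f g \<in> hom C X Y \<and> ngt C f \<in> hom C X Y \<and>
        pls C f g = pls C g f \<and> pls C f (zer C X Y) = f \<and>
        pls C f (ngt C f) = zer C X Y) \<and>
     (\<forall>X Y f g h. f \<in> hom C X Y \<and> g \<in> hom C X Y \<and> h \<in> hom C X Y \<longrightarrow>
        pls C (pls C f g) h = pls C f (pls C g h)) \<and>
     (\<forall>X Y Z f g h. f \<in> hom C X Y \<and> g \<in> hom C X Y \<and> h \<in> hom C Y Z \<longrightarrow>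
        cmp C h (pls C f g) = pls C (cmp C h f) (cmp C h g)) \<and>
     (\<forall>X Y Z f g h. f \<in> hom C Y Z \<and> g \<in> hom C Y Z \<and> h \<in> hom C X Y \<longrightarrow>
        cmp C (pls C f g) h = pls C (cmp C f h) (cmp C g h)) \<and>
     (\<exists>Z. zero_obj C Z) \<and>
     (\<forall>X \<in> obj C. \<forall>Y \<in> obj C. \<exists>B i1 i2 p1 p2. biproduct C X Y B i1 i2 p1 p2)"

definition shift_equivalence :: "('o,'m,'x) tricat_scheme \<Rightarrow> bool" where
  "shift_equivalence C \<longleftrightarrow>
     (\<forall>X \<in> obj C. sho C X \<in> obj C) \<and>
     (\<forall>X Y f. f \<in> hom C X Y \<longrightarrow> shm C f \<in> hom C (sho C X) (sho C Y)) \<and>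
     (\<forall>X Y Z f g. f \<in> hom C X Y \<and> g \<in> hom C Y Z \<longrightarrow>
        shm C (cmp C g f) = cmp C (shm C g) (shm C f)) \<and>
     (\<forall>X \<in> obj C. shm C (idm C X) = idm C (sho C X)) \<and>
     (\<forall>X Y f g. f \<in> hom C X Y \<and> g \<in> hom C X Y \<longrightarrow>
        shm C (pls C f g) = pls C (shm C f) (shm C g)) \<and>
     (\<forall>X \<in> obj C. \<forall>Y \<in> obj C. bij_betw (shm C) (hom C X Y) (hom C (sho C X) (sho C Y))) \<and>
     (\<forall>Y \<in> obj C. \<exists>X \<in> obj C. isomorphic C (sho C X) Y)"

definition triangle :: "('o,'m,'x) tricat_scheme \<Rightarrow> 'o \<Rightarrow> 'o \<Rightarrow> 'o \<Rightarrow> 'm \<Rightarrow> 'm \<Rightarrow> 'm \<Rightarrow> bool" where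
  "triangle C X Y Z f g h \<longleftrightarrow> f \<in> hom C X Y \<and> g \<in> hom C Y Z \<and> h \<in> hom C Z (sho C X)"

definition triangulated_category :: "('o,'m,'x) tricat_scheme \<Rightarrow> bool" where
  "triangulated_category C \<longleftrightarrow> additive_category C \<and> shift_equivalence C \<and>
     \<comment> \<open>distinguished triangles are triangles\<close>
     (\<forall>X Y Z f g h. (X,Y,Z,f,g,h) \<in> dist C \<longrightarrow> triangle C X Y Z f g h) \<and>
     \<comment> \<open>TR1: closure under isomorphism of triangles\<close>
     (\<forall>X Y Z f g h X' Y' Z' f' g' h' a b c.
        (X,Y,Z,f,g,h) \<in> dist C \<and> triangle C X' Y' Z' f' g' h' \<and>
        is_iso C X X' a \<and> is_iso C Y Y' b \<and> is_iso C Z Z' c \<and>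
        cmp C b f = cmp C f' a \<and> cmp C c g = cmp C g' b \<and>
        cmp C (shm C a) h = cmp C h' c \<longrightarrow> (X',Y',Z',f',g',h') \<in> dist C) \<and>
     \<comment> \<open>TR1: X = X -> 0 -> X[1] is distinguished\<close>
     (\<forall>X \<in> obj C. \<forall>Z. zero_obj C Z \<longrightarrow>
        (X, X, Z, idm C X, zer C X Z, zer C Z (sho C X)) \<in> dist C) \<and>
     \<comment> \<open>TR1: every morphism extends to a distinguished triangle\<close>
     (\<forall>X Y f. f \<in> hom C X Y \<longrightarrow> (\<exists>Z g h. (X,Y,Z,f,g,h) \<in> dist C)) \<and>
     \<comment> \<open>TR2: rotation\<close>
     (\<forall>X Y Z f g h. triangle C X Y Z f g h \<longrightarrow>
        ((X,Y,Z,f,g,h) \<in> dist C \<longleftrightarrow> (Y, Z, sho C X, g, h, ngt C (shm C f)) \<in> dist C)) \<and>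
     \<comment> \<open>TR3: completion of morphisms of triangles\<close>
     (\<forall>X Y Z f g h X' Y' Z' f' g' h' u v.
        (X,Y,Z,f,g,h) \<in> dist C \<and> (X',Y',Z',f',g',h') \<in> dist C \<and>
        u \<in> hom C X X' \<and> v \<in> hom C Y Y' \<and> cmp C v f = cmp C f' u \<longrightarrow>
        (\<exists>w \<in> hom C Z Z'. cmp C w g = cmp C g' v \<and> cmp C (shm C u) h = cmp C h' w)) \<and>
     \<comment> \<open>TR4: octahedral axiom\<close>
     (\<forall>X Y Z f g Z' f1 f2 X' g1 g2 Y' h1 h2.
        (X, Y, Z', f, f1, f2) \<in> dist C \<and> (Y, Z, X', g, g1, g2) \<in> dist C \<and>
        (X, Z, Y', cmp C g f, h1, h2) \<in> dist C \<longrightarrow>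
        (\<exists>u v. (Z', Y', X', u, v, cmp C (shm C f1) g2) \<in> dist C \<and>
           cmp C u f1 = cmp C h1 g \<and> cmp C h2 u = f2 \<and>
           cmp C v h1 = g1 \<and> cmp C g2 v = cmp C (shm C f) h2))"

text \<open>Full subcategories are represented by sets of objects.\<close>

definition ext :: "('o,'m,'x) tricat_scheme \<Rightarrow> 'o set \<Rightarrow> 'o set \<Rightarrow> 'o set" where
  "ext C \<X> \<Y> = {M \<in> obj C. \<exists>X Y f g h. X \<in> \<X> \<and> Y \<in> \<Y> \<and> (X, M, Y, f, g, h) \<in> dist C}"

definition shift_up :: "('o,'m,'x) tricat_scheme \<Rightarrow> 'o set \<Rightarrow> 'o set" where
  "shift_up C \<X> = {M \<in> obj C. \<exists>X \<in> \<X>. isomorphic C M (sho C X)}"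

definition shift_down :: "('o,'m,'x) tricat_scheme \<Rightarrow> 'o set \<Rightarrow> 'o set" where
  "shift_down C \<X> = {M \<in> obj C. sho C M \<in> \<X>}"

definition full_subcat :: "('o,'m,'x) tricat_scheme \<Rightarrow> 'o set \<Rightarrow> bool" where
  "full_subcat C \<A> \<longleftrightarrow> \<A> \<subseteq> obj C \<and>
     (\<forall>X Y. X \<in> \<A> \<and> Y \<in> obj C \<and> isomorphic C X Y \<longrightarrow> Y \<in> \<A>) \<and>
     (\<forall>Z. zero_obj C Z \<longrightarrow> Z \<in> \<A>) \<and>
     (\<forall>X Y B i1 i2 p1 p2. biproduct C X Y B i1 i2 p1 p2 \<longrightarrow>
        (X \<in> \<A> \<and> Y \<in> \<A> \<longleftrightarrow> B \<in> \<A>))"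

definition hom_vanish :: "('o,'m,'x) tricat_scheme \<Rightarrow> 'o set \<Rightarrow> 'o set \<Rightarrow> bool" where
  "hom_vanish C \<A> \<B> \<longleftrightarrow> (\<forall>A \<in> \<A>. \<forall>B \<in> \<B>. hom C A B = {zer C A B})"

definition cotorsion_pair :: "('o,'m,'x) tricat_scheme \<Rightarrow> 'o set \<Rightarrow> 'o set \<Rightarrow> bool" where
  "cotorsion_pair C \<A> \<B> \<longleftrightarrow> full_subcat C \<A> \<and> full_subcat C \<B> \<and>
     obj C = ext C \<A> (shift_up C \<B>) \<and> hom_vanish C \<A> (shift_up C \<B>)"

definition twin_cotorsion_pair ::
  "('o,'m,'x) tricat_scheme \<Rightarrow> 'o set \<Rightarrow> 'o set \<Rightarrow> 'o set \<Rightarrow> 'o set \<Rightarrow> bool" where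
  "twin_cotorsion_pair C \<S> \<T> \<U> \<V> \<longleftrightarrow> cotorsion_pair C \<S> \<T> \<and> cotorsion_pair C \<U> \<V> \<and>
     hom_vanish C \<S> (shift_up C \<V>)"

definition factors_through :: "('o,'m,'x) tricat_scheme \<Rightarrow> 'o set \<Rightarrow> 'o \<Rightarrow> 'o \<Rightarrow> 'm \<Rightarrow> bool" where
  "factors_through C \<W> X Y f \<longleftrightarrow> f \<in> hom C X Y \<and>
     (\<exists>W \<in> \<W>. \<exists>a \<in> hom C X W. \<exists>b \<in> hom C W Y. f = cmp C b a)"

text \<open>Equality of morphisms X \<rightarrow> Y in the ideal quotient C/\<W>.\<close>
definition qeq :: "('o,'m,'x) tricat_scheme \<Rightarrow> 'o set \<Rightarrow> 'o \<Rightarrow> 'o \<Rightarrow> 'm \<Rightarrow> 'm \<Rightarrow> bool" where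
  "qeq C \<W> X Y f g \<longleftrightarrow> f \<in> hom C X Y \<and> g \<in> hom C X Y \<and>
     factors_through C \<W> X Y (pls C f (ngt C g))"

text \<open>(A, e) is a value of the right adjoint of the inclusion \<D>/\<W> \<rightarrow> C/\<W> at X
(a \<D>-coreflection of X in C/\<W>, with counit e : A \<rightarrow> X).\<close>
definition coreflection :: "('o,'m,'x) tricat_scheme \<Rightarrow> 'o set \<Rightarrow> 'o set \<Rightarrow> 'o \<Rightarrow> 'o \<Rightarrow> 'm \<Rightarrow> bool" where
  "coreflection C \<W> \<D> X A e \<longleftrightarrow> A \<in> \<D> \<and> e \<in> hom C A X \<and>
     (\<forall>Y \<in> \<D>. \<forall>g \<in> hom C Y X. \<exists>p \<in> hom C Y A. qeq C \<W> Y X (cmp C e p) g) \<and>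
     (\<forall>Y \<in> \<D>. \<forall>p \<in> hom C Y A. \<forall>p' \<in> hom C Y A.
        qeq C \<W> Y X (cmp C e p) (cmp C e p') \<longrightarrow> qeq C \<W> Y A p p')"

text \<open>(B, u) is a value of the left adjoint of the inclusion \<D>/\<W> \<rightarrow> C/\<W> at X
(a \<D>-reflection of X in C/\<W>, with unit u : X \<rightarrow> B).\<close>
definition reflection :: "('o,'m,'x) tricat_scheme \<Rightarrow> 'o set \<Rightarrow> 'o set \<Rightarrow> 'o \<Rightarrow> 'o \<Rightarrow> 'm \<Rightarrow> bool" where
  "reflection C \<W> \<D> X B u \<longleftrightarrow> B \<in> \<D> \<and> u \<in> hom C X B \<and>
     (\<forall>Y \<in> \<D>. \<forall>g \<in> hom C X Y. \<exists>p \<in> hom C B Y. qeq C \<W> X Y (cmp C p u) g) \<and>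
     (\<forall>Y \<in> \<D>. \<forall>p \<in> hom C B Y. \<forall>p' \<in> hom C B Y.
        qeq C \<W> X Y (cmp C p u) (cmp C p' u) \<longrightarrow> qeq C \<W> B Y p p')"

definition tcp_W :: "'o set \<Rightarrow> 'o set \<Rightarrow> 'o set" where
  "tcp_W \<U> \<T> = \<U> \<inter> \<T>"

definition tcp_Cplus :: "('o,'m,'x) tricat_scheme \<Rightarrow> 'o set \<Rightarrow> 'o set \<Rightarrow> 'o set \<Rightarrow> 'o set" where
  "tcp_Cplus C \<T> \<U> \<V> = ext C (tcp_W \<U> \<T>) (shift_up C \<V>)"

definition tcp_Cminus :: "('o,'m,'x) tricat_scheme \<Rightarrow> 'o set \<Rightarrow> 'o set \<Rightarrow> 'o set \<Rightarrow> 'o set" where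
  "tcp_Cminus C \<S> \<T> \<U> = ext C (shift_down C \<S>) (tcp_W \<U> \<T>)"

text \<open>H(X) is computed as tau+ tau- X: (A, e) a value of tau- at X, (B, u) a value of
tau+ at A. This predicate says: B is (a representative of) H(X).\<close>
definition H_value ::
  "('o,'m,'x) tricat_scheme \<Rightarrow> 'o set \<Rightarrow> 'o set \<Rightarrow> 'o set \<Rightarrow> 'o set \<Rightarrow> 'o \<Rightarrow> 'o \<Rightarrow> 'm \<Rightarrow> 'o \<Rightarrow> 'm \<Rightarrow> bool" where
  "H_value C \<S> \<T> \<U> \<V> X A e B u \<longleftrightarrow>
     coreflection C (tcp_W \<U> \<T>) (tcp_Cminus C \<S> \<T> \<U>) X A e \<and>
     reflection C (tcp_W \<U> \<T>) (tcp_Cplus C \<T> \<U> \<V>) A B u"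

definition zero_in_quotient :: "('o,'m,'x) tricat_scheme \<Rightarrow> 'o set \<Rightarrow> 'o \<Rightarrow> bool" where
  "zero_in_quotient C \<W> B \<longleftrightarrow> factors_through C \<W> B B (idm C B)"

end

theory Submission
  imports Defs
begin

locale tc =
  fixes C :: "('o,'m) tricat"
  assumes tri: "triangulated_category C"
begin

lemma add: "additive_category C" using tri by (simp add: triangulated_category_def)
lemma sheq: "shift_equivalence C" using tri by (simp add: triangulated_category_def)

lemma hom_obj: "f \<in> hom C X Y \<Longrightarrow> X \<in> obj C \<and> Y \<in> obj C"
  using add[unfolded additive_category_def, THEN conjunct1] by blast
lemma comp: "f \<in> hom C X Y \<Longrightarrow> g \<in> hom C Y Z \<Longrightarrow> cmp C g f \<in> hom C X Z"
  using add[unfolded additive_category_def, THEN conjunct2, THEN conjunct2, THEN conjunct2, THEN conjunct1] by blast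
lemma idm: "X \<in> obj C \<Longrightarrow> idm C X \<in> hom C X X"
  using add[unfolded additive_category_def, THEN conjunct2, THEN conjunct2, THEN conjunct1] by blast
lemma idl: "f \<in> hom C X Y \<Longrightarrow> cmp C (idm C Y) f = f"
  using add[unfolded additive_category_def, THEN conjunct2, THEN conjunct2, THEN conjunct2, THEN conjunct2, THEN conjunct1] by blast
lemma idr: "f \<in> hom C X Y \<Longrightarrow> cmp C f (idm C X) = f"
  using add[unfolded additive_category_def, THEN conjunct2, THEN conjunct2, THEN conjunct2, THEN conjunct2, THEN conjunct1] by blast
lemma assoc: "f \<in> hom C W X \<Longrightarrow> g \<in> hom C X Y \<Longrightarrow> h \<in> hom C Y Z \<Longrightarrow>
   cmp C h (cmp C g f) = cmp C (cmp C h g) f"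
  using add[unfolded additive_category_def, THEN conjunct2, THEN conjunct2, THEN conjunct2, THEN conjunct2, THEN conjunct2, THEN conjunct1] by blast
lemma zer: "X \<in> obj C \<Longrightarrow> Y \<in> obj C \<Longrightarrow> zer C X Y \<in> hom C X Y"
  using add[unfolded additive_category_def, THEN conjunct2, THEN conjunct2, THEN conjunct2, THEN conjunct2, THEN conjunct2, THEN conjunct2, THEN conjunct1] by blast
lemma plsh: "f \<in> hom C X Y \<Longrightarrow> g \<in> hom C X Y \<Longrightarrow> pls C f g \<in> hom C X Y"
  using add[unfolded additive_category_def, THEN conjunct2, THEN conjunct2, THEN conjunct2, THEN conjunct2, THEN conjunct2, THEN conjunct2, THEN conjunct2, THEN conjunct1] by blast
lemma ngth: "f \<in> hom C X Y \<Longrightarrow> ngt C f \<in> hom C X Y"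
  using add[unfolded additive_category_def, THEN conjunct2, THEN conjunct2, THEN conjunct2, THEN conjunct2, THEN conjunct2, THEN conjunct2, THEN conjunct2, THEN conjunct1] by blast
lemma pls_comm: "f \<in> hom C X Y \<Longrightarrow> g \<in> hom C X Y \<Longrightarrow> pls C f g = pls C g f"
  using add[unfolded additive_category_def, THEN conjunct2, THEN conjunct2, THEN conjunct2, THEN conjunct2, THEN conjunct2, THEN conjunct2, THEN conjunct2, THEN conjunct1] by blast
lemma pls_0: "f \<in> hom C X Y \<Longrightarrow> pls C f (zer C X Y) = f"
  using add[unfolded additive_category_def, THEN conjunct2, THEN conjunct2, THEN conjunct2, THEN conjunct2, THEN conjunct2, THEN conjunct2, THEN conjunct2, THEN conjunct1] by blast
lemma pls_ngt: "f \<in> hom C X Y \<Longrightarrow> pls C f (ngt C f) = zer C X Y"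
  using add[unfolded additive_category_def, THEN conjunct2, THEN conjunct2, THEN conjunct2, THEN conjunct2, THEN conjunct2, THEN conjunct2, THEN conjunct2, THEN conjunct1] by blast
lemma pls_assoc: "f \<in> hom C X Y \<Longrightarrow> g \<in> hom C X Y \<Longrightarrow> h \<in> hom C X Y \<Longrightarrow>
   pls C (pls C f g) h = pls C f (pls C g h)"
  using add[unfolded additive_category_def, THEN conjunct2, THEN conjunct2, THEN conjunct2, THEN conjunct2, THEN conjunct2, THEN conjunct2, THEN conjunct2, THEN conjunct2, THEN conjunct1] by blast
lemma distl: "f \<in> hom C X Y \<Longrightarrow> g \<in> hom C X Y \<Longrightarrow> h \<in> hom C Y Z \<Longrightarrow>
   cmp C h (pls C f g) = pls C (cmp C h f) (cmp C h g)"
  using add[unfolded additive_category_def, THEN conjunct2, THEN conjunct2, THEN conjunct2, THEN conjunct2, THEN conjunct2, THEN conjunct2, THEN conjunct2, THEN conjunct2, THEN conjunct2, THEN conjunct1] by blast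
lemma distr: "f \<in> hom C Y Z \<Longrightarrow> g \<in> hom C Y Z \<Longrightarrow> h \<in> hom C X Y \<Longrightarrow>
   cmp C (pls C f g) h = pls C (cmp C f h) (cmp C g h)"
  using add[unfolded additive_category_def, THEN conjunct2, THEN conjunct2, THEN conjunct2, THEN conjunct2, THEN conjunct2, THEN conjunct2, THEN conjunct2, THEN conjunct2, THEN conjunct2, THEN conjunct2, THEN conjunct1] by blast
lemma zero_ex: "\<exists>Z. zero_obj C Z"
  using add[unfolded additive_category_def, THEN conjunct2, THEN conjunct2, THEN conjunct2, THEN conjunct2, THEN conjunct2, THEN conjunct2, THEN conjunct2, THEN conjunct2, THEN conjunct2, THEN conjunct2, THEN conjunct2, THEN conjunct1] by blast
lemma biprod_ex: "X \<in> obj C \<Longrightarrow> Y \<in> obj C \<Longrightarrow> \<exists>B i1 i2 p1 p2. biproduct C X Y B i1 i2 p1 p2"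
  using add[unfolded additive_category_def, THEN conjunct2, THEN conjunct2, THEN conjunct2, THEN conjunct2, THEN conjunct2, THEN conjunct2, THEN conjunct2, THEN conjunct2, THEN conjunct2, THEN conjunct2, THEN conjunct2, THEN conjunct2] by blast

lemma zero_hom: "zero_obj C Z \<Longrightarrow> X \<in> obj C \<Longrightarrow> hom C Z X = {zer C Z X} \<and> hom C X Z = {zer C X Z}"
  unfolding zero_obj_def by blast

lemma pls_0l: "f \<in> hom C X Y \<Longrightarrow> pls C (zer C X Y) f = f"
  by (metis pls_0 pls_comm hom_obj zer)

lemma neg_unique: "x \<in> hom C X Y \<Longrightarrow> y \<in> hom C X Y \<Longrightarrow> pls C x y = zer C X Y \<Longrightarrow> y = ngt C x"
proof -
  assume a: "x \<in> hom C X Y" "y \<in> hom C X Y" "pls C x y = zer C X Y"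
  have "y = pls C y (pls C x (ngt C x))" using a pls_0 pls_ngt by metis
  also have "\<dots> = pls C (pls C y x) (ngt C x)" using a pls_assoc ngth by metis
  also have "\<dots> = ngt C x" using a pls_comm pls_0l ngth by metis
  finally show ?thesis .
qed

lemma ngt_ngt: "f \<in> hom C X Y \<Longrightarrow> ngt C (ngt C f) = f"
  by (metis neg_unique ngth pls_comm pls_ngt)

lemma ngt_zer: "X \<in> obj C \<Longrightarrow> Y \<in> obj C \<Longrightarrow> ngt C (zer C X Y) = zer C X Y"
  by (metis neg_unique pls_0 zer)

lemma ngt_pls: "f \<in> hom C X Y \<Longrightarrow> g \<in> hom C X Y \<Longrightarrow> ngt C (pls C f g) = pls C (ngt C f) (ngt C g)"
proof -
  assume a: "f \<in> hom C X Y" "g \<in> hom C X Y"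
  have n: "ngt C f \<in> hom C X Y" "ngt C g \<in> hom C X Y" using a ngth by auto
  have "pls C (pls C f g) (pls C (ngt C f) (ngt C g)) = pls C f (pls C g (pls C (ngt C f) (ngt C g)))"
    using a n plsh pls_assoc by blast
  also have "pls C g (pls C (ngt C f) (ngt C g)) = pls C g (pls C (ngt C g) (ngt C f))"
    using n pls_comm by metis
  also have "\<dots> = pls C (pls C g (ngt C g)) (ngt C f)" using a n pls_assoc by metis
  also have "\<dots> = ngt C f" using a n pls_ngt pls_0l by metis
  also have "pls C f (ngt C f) = zer C X Y" using a pls_ngt by blast
  finally show ?thesis using a n by (metis neg_unique plsh)
qed

lemma self_zero: "x \<in> hom C X Y \<Longrightarrow> pls C x x = x \<Longrightarrow> x = zer C X Y"
  by (metis pls_assoc pls_ngt pls_0 ngth)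

lemma cmp_zer_r: "f \<in> hom C Y Z \<Longrightarrow> X \<in> obj C \<Longrightarrow> cmp C f (zer C X Y) = zer C X Z"
proof -
  assume a: "f \<in> hom C Y Z" "X \<in> obj C"
  have y: "Y \<in> obj C" using a hom_obj by blast
  have "cmp C f (zer C X Y) = cmp C f (pls C (zer C X Y) (zer C X Y))" using a y zer pls_0 by metis
  also have "\<dots> = pls C (cmp C f (zer C X Y)) (cmp C f (zer C X Y))" using a y zer distl by metis
  finally show ?thesis using a y zer comp self_zero by metis
qed

lemma cmp_zer_l: "f \<in> hom C X Y \<Longrightarrow> Z \<in> obj C \<Longrightarrow> cmp C (zer C Y Z) f = zer C X Z"
proof -
  assume a: "f \<in> hom C X Y" "Z \<in> obj C"
  have y: "Y \<in> obj C" using a hom_obj by blast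
  have "cmp C (zer C Y Z) f = cmp C (pls C (zer C Y Z) (zer C Y Z)) f" using a y zer pls_0 by metis
  also have "\<dots> = pls C (cmp C (zer C Y Z) f) (cmp C (zer C Y Z) f)" using a y zer distr by metis
  finally show ?thesis using a y zer comp self_zero by metis
qed

lemma cmp_ngt_l: "f \<in> hom C Y Z \<Longrightarrow> g \<in> hom C X Y \<Longrightarrow> cmp C (ngt C f) g = ngt C (cmp C f g)"
proof -
  assume a: "f \<in> hom C Y Z" "g \<in> hom C X Y"
  have "pls C (cmp C f g) (cmp C (ngt C f) g) = cmp C (zer C Y Z) g"
    using a by (metis distr ngth pls_ngt)
  also have "\<dots> = zer C X Z" using a cmp_zer_l hom_obj by blast
  finally show ?thesis using a by (metis neg_unique comp ngth)
qed

lemma cmp_ngt_r: "f \<in> hom C Y Z \<Longrightarrow> g \<in> hom C X Y \<Longrightarrow> cmp C f (ngt C g) = ngt C (cmp C f g)"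
proof -
  assume a: "f \<in> hom C Y Z" "g \<in> hom C X Y"
  have "pls C (cmp C f g) (cmp C f (ngt C g)) = cmp C f (zer C X Y)"
    using a by (metis distl ngth pls_ngt)
  also have "\<dots> = zer C X Z" using a cmp_zer_r hom_obj by blast
  finally show ?thesis using a by (metis neg_unique comp ngth)
qed


lemma sho_obj: "X \<in> obj C \<Longrightarrow> sho C X \<in> obj C"
  using sheq[unfolded shift_equivalence_def, THEN conjunct1] by blast
lemma shm_hom: "f \<in> hom C X Y \<Longrightarrow> shm C f \<in> hom C (sho C X) (sho C Y)"
  using sheq[unfolded shift_equivalence_def, THEN conjunct2, THEN conjunct1] by blast
lemma shm_cmp: "f \<in> hom C X Y \<Longrightarrow> g \<in> hom C Y Z \<Longrightarrow> shm C (cmp C g f) = cmp C (shm C g) (shm C f)"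
  using sheq[unfolded shift_equivalence_def, THEN conjunct2, THEN conjunct2, THEN conjunct1] by blast
lemma shm_id: "X \<in> obj C \<Longrightarrow> shm C (idm C X) = idm C (sho C X)"
  using sheq[unfolded shift_equivalence_def, THEN conjunct2, THEN conjunct2, THEN conjunct2, THEN conjunct1] by blast
lemma shm_pls: "f \<in> hom C X Y \<Longrightarrow> g \<in> hom C X Y \<Longrightarrow> shm C (pls C f g) = pls C (shm C f) (shm C g)"
  using sheq[unfolded shift_equivalence_def, THEN conjunct2, THEN conjunct2, THEN conjunct2, THEN conjunct2, THEN conjunct1] by blast
lemma shm_bij: "X \<in> obj C \<Longrightarrow> Y \<in> obj C \<Longrightarrow> bij_betw (shm C) (hom C X Y) (hom C (sho C X) (sho C Y))"
  using sheq[unfolded shift_equivalence_def, THEN conjunct2, THEN conjunct2, THEN conjunct2, THEN conjunct2, THEN conjunct2, THEN conjunct1] by blast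
lemma ess_surj: "Y \<in> obj C \<Longrightarrow> \<exists>X \<in> obj C. isomorphic C (sho C X) Y"
  using sheq[unfolded shift_equivalence_def, THEN conjunct2, THEN conjunct2, THEN conjunct2, THEN conjunct2, THEN conjunct2, THEN conjunct2] by blast

lemma dist_tri: "(X,Y,Z,f,g,h) \<in> dist C \<Longrightarrow> f \<in> hom C X Y \<and> g \<in> hom C Y Z \<and> h \<in> hom C Z (sho C X)"
  using tri[unfolded triangulated_category_def, THEN conjunct2, THEN conjunct2, THEN conjunct1] unfolding triangle_def by blast
lemma TR1iso: "(X,Y,Z,f,g,h) \<in> dist C \<Longrightarrow> triangle C X' Y' Z' f' g' h' \<Longrightarrow>
        is_iso C X X' a \<Longrightarrow> is_iso C Y Y' b \<Longrightarrow> is_iso C Z Z' c \<Longrightarrow>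
        cmp C b f = cmp C f' a \<Longrightarrow> cmp C c g = cmp C g' b \<Longrightarrow>
        cmp C (shm C a) h = cmp C h' c \<Longrightarrow> (X',Y',Z',f',g',h') \<in> dist C"
  using tri[unfolded triangulated_category_def, THEN conjunct2, THEN conjunct2, THEN conjunct2, THEN conjunct1] by blast
lemma triv: "X \<in> obj C \<Longrightarrow> zero_obj C Z \<Longrightarrow>
        (X, X, Z, idm C X, zer C X Z, zer C Z (sho C X)) \<in> dist C"
  using tri[unfolded triangulated_category_def, THEN conjunct2, THEN conjunct2, THEN conjunct2, THEN conjunct2, THEN conjunct1] by blast
lemma exist_tri: "f \<in> hom C X Y \<Longrightarrow> \<exists>Z g h. (X,Y,Z,f,g,h) \<in> dist C"
  using tri[unfolded triangulated_category_def, THEN conjunct2, THEN conjunct2, THEN conjunct2, THEN conjunct2, THEN conjunct2, THEN conjunct1] by blast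
lemma TR2: "triangle C X Y Z f g h \<Longrightarrow>
        ((X,Y,Z,f,g,h) \<in> dist C \<longleftrightarrow> (Y, Z, sho C X, g, h, ngt C (shm C f)) \<in> dist C)"
  using tri[unfolded triangulated_category_def, THEN conjunct2, THEN conjunct2, THEN conjunct2, THEN conjunct2, THEN conjunct2, THEN conjunct2, THEN conjunct1] by blast
lemma TR3: "(X,Y,Z,f,g,h) \<in> dist C \<Longrightarrow> (X',Y',Z',f',g',h') \<in> dist C \<Longrightarrow>
        u \<in> hom C X X' \<Longrightarrow> v \<in> hom C Y Y' \<Longrightarrow> cmp C v f = cmp C f' u \<Longrightarrow>
        (\<exists>w \<in> hom C Z Z'. cmp C w g = cmp C g' v \<and> cmp C (shm C u) h = cmp C h' w)"
  using tri[unfolded triangulated_category_def, THEN conjunct2, THEN conjunct2, THEN conjunct2, THEN conjunct2, THEN conjunct2, THEN conjunct2, THEN conjunct2, THEN conjunct1] by blast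

lemma shm_inj: "f \<in> hom C X Y \<Longrightarrow> g \<in> hom C X Y \<Longrightarrow> shm C f = shm C g \<Longrightarrow> f = g"
  by (metis bij_betw_def hom_obj inj_on_def shm_bij)
lemma shm_surj: "k \<in> hom C (sho C X) (sho C Y) \<Longrightarrow> X \<in> obj C \<Longrightarrow> Y \<in> obj C \<Longrightarrow> \<exists>f \<in> hom C X Y. shm C f = k"
  by (metis bij_betw_def imageE shm_bij)
lemma shm_zer: "X \<in> obj C \<Longrightarrow> Y \<in> obj C \<Longrightarrow> shm C (zer C X Y) = zer C (sho C X) (sho C Y)"
  by (metis pls_0 self_zero shm_hom shm_pls zer)
lemma shm_ngt: "f \<in> hom C X Y \<Longrightarrow> shm C (ngt C f) = ngt C (shm C f)"
proof -
  assume f: "f \<in> hom C X Y"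
  have o: "X \<in> obj C" "Y \<in> obj C" using f hom_obj by auto
  have "pls C (shm C f) (shm C (ngt C f)) = shm C (pls C f (ngt C f))" using f ngth shm_pls by metis
  also have "\<dots> = zer C (sho C X) (sho C Y)" using f o pls_ngt shm_zer by metis
  finally show ?thesis using f ngth shm_hom neg_unique by metis
qed

lemma rot: "(X,Y,Z,f,g,h) \<in> dist C \<Longrightarrow> (Y, Z, sho C X, g, h, ngt C (shm C f)) \<in> dist C"
proof -
  assume d: "(X,Y,Z,f,g,h) \<in> dist C"
  have "triangle C X Y Z f g h" using dist_tri[OF d] by (simp add: triangle_def)
  then show ?thesis using TR2 d by blast
qed

lemma rot_back: "(Y,Z,sho C X,g,h,k) \<in> dist C \<Longrightarrow> X \<in> obj C \<Longrightarrow>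
   \<exists>f \<in> hom C X Y. (X,Y,Z,f,g,h) \<in> dist C \<and> ngt C (shm C f) = k"
proof -
  assume d: "(Y,Z,sho C X,g,h,k) \<in> dist C" and x: "X \<in> obj C"
  have t: "g \<in> hom C Y Z" "h \<in> hom C Z (sho C X)" "k \<in> hom C (sho C X) (sho C Y)" using dist_tri[OF d] by auto
  have y: "Y \<in> obj C" using t hom_obj by blast
  obtain f where f: "f \<in> hom C X Y" "shm C f = ngt C k" using shm_surj[OF ngth[OF t(3)] x y] by blast
  have nk: "ngt C (shm C f) = k" using f t ngt_ngt by metis
  have "triangle C X Y Z f g h" using f t by (simp add: triangle_def)
  then have "(X,Y,Z,f,g,h) \<in> dist C" using TR2 d nk by metis
  then show ?thesis using f nk by blast
qed

lemma iso_id: "X \<in> obj C \<Longrightarrow> is_iso C X X (idm C X)"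
  unfolding is_iso_def using idm idl by metis



lemma zero_in: "zero_obj C Z \<Longrightarrow> Z \<in> obj C" by (simp add: zero_obj_def)

lemma iso_hom: "is_iso C X Y f \<Longrightarrow> f \<in> hom C X Y" by (simp add: is_iso_def)
lemma iso_intro: "f \<in> hom C X Y \<Longrightarrow> g \<in> hom C Y X \<Longrightarrow> cmp C g f = idm C X \<Longrightarrow> cmp C f g = idm C Y \<Longrightarrow> is_iso C X Y f"
  by (auto simp: is_iso_def)

lemma iso_inv: "is_iso C X Y f \<Longrightarrow> \<exists>g \<in> hom C Y X. cmp C g f = idm C X \<and> cmp C f g = idm C Y \<and> is_iso C Y X g"
  unfolding is_iso_def by blast

lemma transport:
  assumes d: "(X,Y,Z,f,g,h) \<in> dist C"
    and b: "b \<in> hom C Y Y'" "bi \<in> hom C Y' Y" "cmp C bi b = idm C Y" "cmp C b bi = idm C Y'"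
    and c: "c \<in> hom C Z Z'" "ci \<in> hom C Z' Z" "cmp C ci c = idm C Z" "cmp C c ci = idm C Z'"
  shows "(X, Y', Z', cmp C b f, cmp C (cmp C c g) bi, cmp C h ci) \<in> dist C"
proof -
  have t: "f \<in> hom C X Y" "g \<in> hom C Y Z" "h \<in> hom C Z (sho C X)" using dist_tri[OF d] by auto
  have x: "X \<in> obj C" using t hom_obj by blast
  have tri: "triangle C X Y' Z' (cmp C b f) (cmp C (cmp C c g) bi) (cmp C h ci)"
    unfolding triangle_def using t b c comp by blast
  have ib: "is_iso C Y Y' b" using b iso_intro by blast
  have ic: "is_iso C Z Z' c" using c iso_intro by blast
  have e1: "cmp C b f = cmp C (cmp C b f) (idm C X)" using t b comp idr by metis
  have "cmp C (cmp C (cmp C c g) bi) b = cmp C (cmp C c g) (cmp C bi b)" using t b c comp assoc by metis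
  then have e2: "cmp C c g = cmp C (cmp C (cmp C c g) bi) b" using t b c comp idr by metis
  have "cmp C (cmp C h ci) c = cmp C h (cmp C ci c)" using t c assoc by metis
  then have e3: "cmp C (shm C (idm C X)) h = cmp C (cmp C h ci) c" using t c x idr idl shm_id by metis
  show ?thesis using TR1iso[OF d tri iso_id[OF x] ib ic e1 e2 e3] .
qed

lemma CZ: "(X,Y,Z,f,g,h) \<in> dist C \<Longrightarrow> cmp C g f = zer C X Z"
proof -
  assume d: "(X,Y,Z,f,g,h) \<in> dist C"
  have t: "f \<in> hom C X Y" "g \<in> hom C Y Z" "h \<in> hom C Z (sho C X)" using dist_tri[OF d] by auto
  have x: "X \<in> obj C" using t hom_obj by blast
  obtain Zr where z: "zero_obj C Zr" using zero_ex by blast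
  have "cmp C f (idm C X) = cmp C f (idm C X)" ..
  then obtain w where w: "w \<in> hom C Zr Z" "cmp C w (zer C X Zr) = cmp C g f"
    using TR3[OF triv[OF x z] d idm[OF x] t(1)] t idr idl by (metis)
  show ?thesis using w x cmp_zer_r by metis
qed

lemma WK: "(X,Y,Z,f,g,h) \<in> dist C \<Longrightarrow> m \<in> hom C W Y \<Longrightarrow> cmp C g m = zer C W Z \<Longrightarrow>
   \<exists>n \<in> hom C W X. m = cmp C f n"
proof -
  assume d: "(X,Y,Z,f,g,h) \<in> dist C" and m: "m \<in> hom C W Y" and gm: "cmp C g m = zer C W Z"
  have t: "f \<in> hom C X Y" "g \<in> hom C Y Z" "h \<in> hom C Z (sho C X)" using dist_tri[OF d] by auto
  have o: "X \<in> obj C" "W \<in> obj C" "Z \<in> obj C" using t m hom_obj by auto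
  obtain Zr where z: "zero_obj C Zr" using zero_ex by blast
  have zo: "Zr \<in> obj C" using z zero_in by blast
  have R: "(W, Zr, sho C W, zer C W Zr, zer C Zr (sho C W), ngt C (shm C (idm C W))) \<in> dist C"
    using rot[OF triv[OF o(2) z]] .
  have R2: "(Y, Z, sho C X, g, h, ngt C (shm C f)) \<in> dist C" using rot[OF d] .
  have c: "cmp C (zer C Zr Z) (zer C W Zr) = cmp C g m" using gm cmp_zer_l zer o zo by metis
  obtain w where w: "w \<in> hom C (sho C W) (sho C X)"
     "cmp C (shm C m) (ngt C (shm C (idm C W))) = cmp C (ngt C (shm C f)) w"
    using TR3[OF R R2 m zer[OF zo o(3)] c] by blast
  obtain n where n: "n \<in> hom C W X" "shm C n = w" using shm_surj[OF w(1) o(2) o(1)] by blast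
  have sm: "shm C m \<in> hom C (sho C W) (sho C Y)" using m shm_hom by blast
  have sf: "shm C f \<in> hom C (sho C X) (sho C Y)" using t shm_hom by blast
  have e1: "cmp C (shm C m) (ngt C (shm C (idm C W))) = ngt C (shm C m)"
  proof -
    have "cmp C (shm C m) (ngt C (shm C (idm C W))) = cmp C (shm C m) (ngt C (idm C (sho C W)))"
      using o shm_id by metis
    also have "\<dots> = ngt C (cmp C (shm C m) (idm C (sho C W)))"
      using cmp_ngt_r[OF sm idm[OF sho_obj[OF o(2)]]] .
    finally show ?thesis using sm idr by metis
  qed
  have e2: "cmp C (ngt C (shm C f)) w = ngt C (cmp C (shm C f) w)" using cmp_ngt_l[OF sf w(1)] .
  have "ngt C (shm C m) = ngt C (cmp C (shm C f) w)" using w(2) e1 e2 by metis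
  then have "shm C m = cmp C (shm C f) w" using sm sf w(1) comp ngt_ngt by metis
  also have "\<dots> = shm C (cmp C f n)" using n t shm_cmp by metis
  finally show ?thesis using shm_inj m n t comp by metis
qed

lemma WC: "(X,Y,Z,f,g,h) \<in> dist C \<Longrightarrow> m \<in> hom C Y W \<Longrightarrow> cmp C m f = zer C X W \<Longrightarrow>
   \<exists>n \<in> hom C Z W. m = cmp C n g"
proof -
  assume d: "(X,Y,Z,f,g,h) \<in> dist C" and m: "m \<in> hom C Y W" and mf: "cmp C m f = zer C X W"
  have t: "f \<in> hom C X Y" "g \<in> hom C Y Z" "h \<in> hom C Z (sho C X)" using dist_tri[OF d] by auto
  have o: "X \<in> obj C" "W \<in> obj C" "Z \<in> obj C" "Y \<in> obj C" using t m hom_obj by auto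
  obtain Zr where z: "zero_obj C Zr" using zero_ex by blast
  have zo: "Zr \<in> obj C" using z zero_in by blast
  obtain X1 where x1: "X1 \<in> obj C" "isomorphic C (sho C X1) W" using ess_surj[OF o(2)] by blast
  obtain phi where phi: "is_iso C (sho C X1) W phi" using x1(2) unfolding isomorphic_def by blast
  obtain phinv where pi: "phinv \<in> hom C W (sho C X1)" "cmp C phinv phi = idm C (sho C X1)"
      "cmp C phi phinv = idm C W" using iso_inv[OF phi] by blast
  have ph: "phi \<in> hom C (sho C X1) W" using phi iso_hom by blast
  have R: "(Zr, sho C X1, sho C X1, zer C Zr (sho C X1), ngt C (shm C (idm C X1)),
            ngt C (shm C (zer C X1 Zr))) \<in> dist C"
    using rot[OF rot[OF triv[OF x1(1) z]]] .
  have v: "cmp C phinv m \<in> hom C Y (sho C X1)" using pi m comp by blast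
  have c: "cmp C (cmp C phinv m) f = cmp C (zer C Zr (sho C X1)) (zer C X Zr)"
  proof -
    have "cmp C (cmp C phinv m) f = cmp C phinv (cmp C m f)" using t m pi assoc by metis
    also have "\<dots> = zer C X (sho C X1)" using mf pi(1) o cmp_zer_r by metis
    finally show ?thesis using cmp_zer_l zer o zo sho_obj x1 by metis
  qed
  obtain w where w: "w \<in> hom C Z (sho C X1)"
     "cmp C w g = cmp C (ngt C (shm C (idm C X1))) (cmp C phinv m)"
    using TR3[OF d R zer[OF o(1) zo] v c] by blast
  have wg: "cmp C w g = ngt C (cmp C phinv m)"
    using w(2) shm_id x1 cmp_ngt_l idl v idm sho_obj by metis
  define n where "n = ngt C (cmp C phi w)"
  have n: "n \<in> hom C Z W" unfolding n_def using ph w comp ngth by blast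
  have "cmp C n g = ngt C (cmp C (cmp C phi w) g)" unfolding n_def using ph w t comp cmp_ngt_l by metis
  also have "\<dots> = ngt C (cmp C phi (cmp C w g))" using ph w t assoc by metis
  also have "\<dots> = ngt C (ngt C (cmp C phi (cmp C phinv m)))" using wg ph v cmp_ngt_r by metis
  also have "\<dots> = cmp C phi (cmp C phinv m)" using ph v comp ngt_ngt by metis
  also have "\<dots> = m" using assoc[OF m pi(1) ph] pi(3) idl[OF m] by metis
  finally show ?thesis using n by metis
qed


end

locale twin = tc +
  fixes S T U V :: "'o set"
  assumes tw: "twin_cotorsion_pair C S T U V"
begin

lemma cpST: "cotorsion_pair C S T" using tw by (simp add: twin_cotorsion_pair_def)
lemma cpUV: "cotorsion_pair C U V" using tw by (simp add: twin_cotorsion_pair_def)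
lemma hvSV: "hom_vanish C S (shift_up C V)" using tw by (simp add: twin_cotorsion_pair_def)
lemma fS: "full_subcat C S" using cpST by (simp add: cotorsion_pair_def)
lemma fT: "full_subcat C T" using cpST by (simp add: cotorsion_pair_def)
lemma fU: "full_subcat C U" using cpUV by (simp add: cotorsion_pair_def)
lemma fV: "full_subcat C V" using cpUV by (simp add: cotorsion_pair_def)
lemma objST: "obj C = ext C S (shift_up C T)" using cpST by (simp add: cotorsion_pair_def)
lemma objUV: "obj C = ext C U (shift_up C V)" using cpUV by (simp add: cotorsion_pair_def)
lemma hvST: "hom_vanish C S (shift_up C T)" using cpST by (simp add: cotorsion_pair_def)
lemma hvUV: "hom_vanish C U (shift_up C V)" using cpUV by (simp add: cotorsion_pair_def)

lemma full_obj: "full_subcat C A \<Longrightarrow> A \<subseteq> obj C" unfolding full_subcat_def by blast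
lemma full_iso: "full_subcat C A \<Longrightarrow> X \<in> A \<Longrightarrow> Y \<in> obj C \<Longrightarrow> isomorphic C X Y \<Longrightarrow> Y \<in> A"
  unfolding full_subcat_def by blast
lemma full_zero: "full_subcat C A \<Longrightarrow> zero_obj C Z \<Longrightarrow> Z \<in> A" unfolding full_subcat_def by blast
lemma full_bip: "full_subcat C A \<Longrightarrow> biproduct C X Y B i1 i2 p1 p2 \<Longrightarrow> (X \<in> A \<and> Y \<in> A \<longleftrightarrow> B \<in> A)"
  unfolding full_subcat_def by blast

lemma hv: "hom_vanish C A B \<Longrightarrow> X \<in> A \<Longrightarrow> Y \<in> B \<Longrightarrow> hom C X Y = {zer C X Y}"
  unfolding hom_vanish_def by blast

lemma ext_E: "M \<in> ext C A B \<Longrightarrow> \<exists>X Y f g h. X \<in> A \<and> Y \<in> B \<and> (X, M, Y, f, g, h) \<in> dist C"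
  unfolding ext_def by blast
lemma ext_I: "M \<in> obj C \<Longrightarrow> X \<in> A \<Longrightarrow> Y \<in> B \<Longrightarrow> (X, M, Y, f, g, h) \<in> dist C \<Longrightarrow> M \<in> ext C A B"
  unfolding ext_def by blast

lemma W_iff: "X \<in> tcp_W U T \<longleftrightarrow> X \<in> U \<and> X \<in> T" unfolding tcp_W_def by blast

lemma ft_hom: "factors_through C (tcp_W U T) X Y f \<Longrightarrow> f \<in> hom C X Y"
  unfolding factors_through_def by blast
lemma ft_E: "factors_through C (tcp_W U T) X Y f \<Longrightarrow>
   \<exists>W0 a b. W0 \<in> tcp_W U T \<and> a \<in> hom C X W0 \<and> b \<in> hom C W0 Y \<and> f = cmp C b a"
  unfolding factors_through_def by blast
lemma ft_I: "W0 \<in> tcp_W U T \<Longrightarrow> a \<in> hom C X W0 \<Longrightarrow> b \<in> hom C W0 Y \<Longrightarrow>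
   factors_through C (tcp_W U T) X Y (cmp C b a)"
  unfolding factors_through_def using comp by blast

lemma ft_left: "factors_through C (tcp_W U T) X Y f \<Longrightarrow> h \<in> hom C Y Z \<Longrightarrow>
   factors_through C (tcp_W U T) X Z (cmp C h f)"
proof -
  assume f: "factors_through C (tcp_W U T) X Y f" and h: "h \<in> hom C Y Z"
  obtain W0 a b where A: "W0 \<in> tcp_W U T" "a \<in> hom C X W0" "b \<in> hom C W0 Y" "f = cmp C b a" using ft_E[OF f] by blast
  have "cmp C h f = cmp C (cmp C h b) a" using A h assoc by metis
  then show ?thesis using ft_I[OF A(1) A(2) comp[OF A(3) h]] by metis
qed
lemma ft_right: "factors_through C (tcp_W U T) X Y f \<Longrightarrow> h \<in> hom C Z X \<Longrightarrow>
   factors_through C (tcp_W U T) Z Y (cmp C f h)"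
proof -
  assume f: "factors_through C (tcp_W U T) X Y f" and h: "h \<in> hom C Z X"
  obtain W0 a b where A: "W0 \<in> tcp_W U T" "a \<in> hom C X W0" "b \<in> hom C W0 Y" "f = cmp C b a" using ft_E[OF f] by blast
  have "cmp C f h = cmp C b (cmp C a h)" using A h assoc by metis
  then show ?thesis using ft_I[OF A(1) comp[OF h A(2)] A(3)] by metis
qed
lemma ft_ngt: "factors_through C (tcp_W U T) X Y f \<Longrightarrow> factors_through C (tcp_W U T) X Y (ngt C f)"
proof -
  assume f: "factors_through C (tcp_W U T) X Y f"
  obtain W0 a b where A: "W0 \<in> tcp_W U T" "a \<in> hom C X W0" "b \<in> hom C W0 Y" "f = cmp C b a" using ft_E[OF f] by blast
  have "ngt C f = cmp C (ngt C b) a" using A cmp_ngt_l by metis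
  then show ?thesis using ft_I[OF A(1) A(2) ngth[OF A(3)]] by metis
qed
lemma ft_zer: "X \<in> obj C \<Longrightarrow> Y \<in> obj C \<Longrightarrow> factors_through C (tcp_W U T) X Y (zer C X Y)"
proof -
  assume o: "X \<in> obj C" "Y \<in> obj C"
  obtain Zr where z: "zero_obj C Zr" using zero_ex by blast
  have zo: "Zr \<in> obj C" using z zero_in by blast
  have w: "Zr \<in> tcp_W U T" using W_iff full_zero fU fT z by blast
  have "cmp C (zer C Zr Y) (zer C X Zr) = zer C X Y" using cmp_zer_l zer o zo by metis
  then show ?thesis using ft_I[OF w zer[OF o(1) zo] zer[OF zo o(2)]] by metis
qed

lemma bip_D: "biproduct C X Y B i1 i2 p1 p2 \<Longrightarrow> B \<in> obj C \<and>
     i1 \<in> hom C X B \<and> i2 \<in> hom C Y B \<and> p1 \<in> hom C B X \<and> p2 \<in> hom C B Y \<and>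
     cmp C p1 i1 = idm C X \<and> cmp C p2 i2 = idm C Y \<and>
     cmp C p1 i2 = zer C Y X \<and> cmp C p2 i1 = zer C X Y \<and>
     pls C (cmp C i1 p1) (cmp C i2 p2) = idm C B"
  by (simp add: biproduct_def)

lemma ft_pls: "factors_through C (tcp_W U T) X Y f \<Longrightarrow> factors_through C (tcp_W U T) X Y g \<Longrightarrow>
   factors_through C (tcp_W U T) X Y (pls C f g)"
proof -
  assume f: "factors_through C (tcp_W U T) X Y f" and g: "factors_through C (tcp_W U T) X Y g"
  obtain W0 a b where A: "W0 \<in> tcp_W U T" "a \<in> hom C X W0" "b \<in> hom C W0 Y" "f = cmp C b a" using ft_E[OF f] by blast
  obtain W1 a' b' where B: "W1 \<in> tcp_W U T" "a' \<in> hom C X W1" "b' \<in> hom C W1 Y" "g = cmp C b' a'" using ft_E[OF g] by blast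
  have o: "W0 \<in> obj C" "W1 \<in> obj C" "X \<in> obj C" "Y \<in> obj C" using A B hom_obj by auto
  obtain Bo i1 i2 p1 p2 where bp: "biproduct C W0 W1 Bo i1 i2 p1 p2" using biprod_ex[OF o(1,2)] by blast
  note D = bip_D[OF bp]
  have BW: "Bo \<in> tcp_W U T" using full_bip[OF fU bp] full_bip[OF fT bp] A(1) B(1) W_iff by blast
  define al where "al = pls C (cmp C i1 a) (cmp C i2 a')"
  define be where "be = pls C (cmp C b p1) (cmp C b' p2)"
  have ia: "cmp C i1 a \<in> hom C X Bo" "cmp C i2 a' \<in> hom C X Bo" using D A B comp by blast+
  have bp1: "cmp C b p1 \<in> hom C Bo Y" "cmp C b' p2 \<in> hom C Bo Y" using D A B comp by blast+
  have al: "al \<in> hom C X Bo" unfolding al_def using ia plsh by blast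
  have be: "be \<in> hom C Bo Y" unfolding be_def using bp1 plsh by blast
  have e1: "cmp C be i1 = b"
  proof -
    have "cmp C be i1 = pls C (cmp C (cmp C b p1) i1) (cmp C (cmp C b' p2) i1)"
      unfolding be_def using distr bp1 D by blast
    also have "cmp C (cmp C b p1) i1 = b" using assoc[of i1 W0 Bo p1 W0 b Y] D A idr by metis
    also have "cmp C (cmp C b' p2) i1 = zer C W0 Y" using assoc[of i1 W0 Bo p2 W1 b' Y] D B cmp_zer_r o by metis
    finally show ?thesis using pls_0 A by metis
  qed
  have e2: "cmp C be i2 = b'"
  proof -
    have "cmp C be i2 = pls C (cmp C (cmp C b p1) i2) (cmp C (cmp C b' p2) i2)"
      unfolding be_def using distr bp1 D by blast
    also have "cmp C (cmp C b' p2) i2 = b'" using assoc[of i2 W1 Bo p2 W1 b' Y] D B idr by metis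
    also have "cmp C (cmp C b p1) i2 = zer C W1 Y" using assoc[of i2 W1 Bo p1 W0 b Y] D A cmp_zer_r o by metis
    finally show ?thesis using pls_0l B by metis
  qed
  have "cmp C be al = pls C (cmp C be (cmp C i1 a)) (cmp C be (cmp C i2 a'))"
    unfolding al_def using distl ia be by blast
  also have "cmp C be (cmp C i1 a) = f" using assoc[of a X W0 i1 Bo be Y] A D be e1 by metis
  also have "cmp C be (cmp C i2 a') = g" using assoc[of a' X W1 i2 Bo be Y] B D be e2 by metis
  finally show ?thesis using ft_I[OF BW al be] by metis
qed

lemma qeq_D: "qeq C (tcp_W U T) X Y f g \<longleftrightarrow> f \<in> hom C X Y \<and> g \<in> hom C X Y \<and>
     factors_through C (tcp_W U T) X Y (pls C f (ngt C g))"
  by (simp add: qeq_def)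

lemma sub_self: "f \<in> hom C X Y \<Longrightarrow> pls C f (ngt C f) = zer C X Y" using pls_ngt .

lemma qeq_refl: "f \<in> hom C X Y \<Longrightarrow> qeq C (tcp_W U T) X Y f f"
  using qeq_D pls_ngt ft_zer hom_obj by metis

lemma qeq_sym: "qeq C (tcp_W U T) X Y f g \<Longrightarrow> qeq C (tcp_W U T) X Y g f"
proof -
  assume q: "qeq C (tcp_W U T) X Y f g"
  have h: "f \<in> hom C X Y" "g \<in> hom C X Y" using q qeq_D by auto
  have "ngt C (pls C f (ngt C g)) = pls C (ngt C f) g" using h ngt_pls ngth ngt_ngt by metis
  also have "\<dots> = pls C g (ngt C f)" using h ngth pls_comm by metis
  finally show ?thesis using q h qeq_D ft_ngt by metis
qed

lemma pls4: "a \<in> hom C X Y \<Longrightarrow> b \<in> hom C X Y \<Longrightarrow> c \<in> hom C X Y \<Longrightarrow> d \<in> hom C X Y \<Longrightarrow>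
   pls C (pls C a b) (pls C c d) = pls C (pls C a c) (pls C b d)"
proof -
  assume h: "a \<in> hom C X Y" "b \<in> hom C X Y" "c \<in> hom C X Y" "d \<in> hom C X Y"
  have "pls C (pls C a b) (pls C c d) = pls C a (pls C b (pls C c d))" using h plsh pls_assoc by metis
  also have "pls C b (pls C c d) = pls C (pls C b c) d" using h pls_assoc by metis
  also have "pls C b c = pls C c b" using h pls_comm by metis
  also have "pls C (pls C c b) d = pls C c (pls C b d)" using h pls_assoc by metis
  also have "pls C a (pls C c (pls C b d)) = pls C (pls C a c) (pls C b d)" using h plsh pls_assoc by metis
  finally show ?thesis .
qed

lemma qeq_trans: "qeq C (tcp_W U T) X Y f g \<Longrightarrow> qeq C (tcp_W U T) X Y g k \<Longrightarrow> qeq C (tcp_W U T) X Y f k"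
proof -
  assume q1: "qeq C (tcp_W U T) X Y f g" and q2: "qeq C (tcp_W U T) X Y g k"
  have h: "f \<in> hom C X Y" "g \<in> hom C X Y" "k \<in> hom C X Y" using q1 q2 qeq_D by auto
  have n: "ngt C g \<in> hom C X Y" "ngt C k \<in> hom C X Y" using h ngth by auto
  have "pls C (pls C f (ngt C g)) (pls C g (ngt C k)) = pls C (pls C f g) (pls C (ngt C g) (ngt C k))"
    using pls4 h n by metis
  also have "\<dots> = pls C f (pls C g (pls C (ngt C g) (ngt C k)))" using h n plsh pls_assoc by metis
  also have "pls C g (pls C (ngt C g) (ngt C k)) = ngt C k" using h n pls_assoc pls_ngt pls_0l by metis
  finally have "pls C (pls C f (ngt C g)) (pls C g (ngt C k)) = pls C f (ngt C k)" .
  then show ?thesis using q1 q2 h qeq_D ft_pls by metis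
qed

lemma qeq_left: "qeq C (tcp_W U T) X Y f g \<Longrightarrow> h \<in> hom C Y Z \<Longrightarrow> qeq C (tcp_W U T) X Z (cmp C h f) (cmp C h g)"
proof -
  assume q: "qeq C (tcp_W U T) X Y f g" and hh: "h \<in> hom C Y Z"
  have h: "f \<in> hom C X Y" "g \<in> hom C X Y" using q qeq_D by auto
  have "cmp C h (pls C f (ngt C g)) = pls C (cmp C h f) (ngt C (cmp C h g))"
    using h hh distl ngth cmp_ngt_r by metis
  then show ?thesis using q h hh qeq_D ft_left comp by metis
qed

lemma qeq_right: "qeq C (tcp_W U T) X Y f g \<Longrightarrow> h \<in> hom C Z X \<Longrightarrow> qeq C (tcp_W U T) Z Y (cmp C f h) (cmp C g h)"
proof -
  assume q: "qeq C (tcp_W U T) X Y f g" and hh: "h \<in> hom C Z X"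
  have h: "f \<in> hom C X Y" "g \<in> hom C X Y" using q qeq_D by auto
  have "cmp C (pls C f (ngt C g)) h = pls C (cmp C f h) (ngt C (cmp C g h))"
    using h hh distr ngth cmp_ngt_l by metis
  then show ?thesis using q h hh qeq_D ft_right comp by metis
qed

lemma qeq_pls: "qeq C (tcp_W U T) X Y f f' \<Longrightarrow> qeq C (tcp_W U T) X Y g g' \<Longrightarrow>
    qeq C (tcp_W U T) X Y (pls C f g) (pls C f' g')"
proof -
  assume q1: "qeq C (tcp_W U T) X Y f f'" and q2: "qeq C (tcp_W U T) X Y g g'"
  have h: "f \<in> hom C X Y" "f' \<in> hom C X Y" "g \<in> hom C X Y" "g' \<in> hom C X Y" using q1 q2 qeq_D by auto
  have n: "ngt C f' \<in> hom C X Y" "ngt C g' \<in> hom C X Y" using h ngth by auto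
  have "pls C (pls C f g) (ngt C (pls C f' g')) = pls C (pls C f g) (pls C (ngt C f') (ngt C g'))"
    using h ngt_pls by metis
  also have "\<dots> = pls C (pls C f (ngt C f')) (pls C g (ngt C g'))" using pls4 h n by metis
  finally show ?thesis using q1 q2 h qeq_D ft_pls plsh by metis
qed

lemma qeq_zero: "f \<in> hom C X Y \<Longrightarrow> qeq C (tcp_W U T) X Y f (zer C X Y) \<longleftrightarrow> factors_through C (tcp_W U T) X Y f"
  using qeq_D ngt_zer pls_0 zer hom_obj by metis

lemma ft_qeq: "qeq C (tcp_W U T) X Y f g \<Longrightarrow> factors_through C (tcp_W U T) X Y g \<Longrightarrow>
    factors_through C (tcp_W U T) X Y f"
  by (metis ft_hom hom_obj qeq_trans qeq_zero zer qeq_D)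



lemma sub_zero_eq: "a \<in> hom C X Y \<Longrightarrow> b \<in> hom C X Y \<Longrightarrow> pls C a (ngt C b) = zer C X Y \<Longrightarrow> a = b"
  by (metis neg_unique ngt_ngt ngth pls_comm)

lemma perpU: assumes x: "X \<in> obj C" and hyp: "\<And>V'. V' \<in> shift_up C V \<Longrightarrow> hom C X V' = {zer C X V'}"
  shows "X \<in> U"
proof -
  obtain U1 V1 f g h where d: "U1 \<in> U" "V1 \<in> shift_up C V" "(U1, X, V1, f, g, h) \<in> dist C"
    using x objUV ext_E by blast
  have t: "f \<in> hom C U1 X" "g \<in> hom C X V1" "h \<in> hom C V1 (sho C U1)" using dist_tri[OF d(3)] by auto
  have g0: "g = zer C X V1" using hyp[OF d(2)] t by blast
  have "cmp C g (idm C X) = zer C X V1" using g0 idr t by metis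
  then obtain k where k: "k \<in> hom C X U1" "idm C X = cmp C f k" using WK[OF d(3) idm[OF x]] by blast
  obtain Y p dl where d2: "(X, U1, Y, k, p, dl) \<in> dist C" using exist_tri[OF k(1)] by blast
  have t2: "p \<in> hom C U1 Y" "dl \<in> hom C Y (sho C X)" using dist_tri[OF d2] by auto
  have o: "U1 \<in> obj C" "Y \<in> obj C" using t2 hom_obj by auto
  have d3: "(U1, Y, sho C X, p, dl, ngt C (shm C k)) \<in> dist C" using rot[OF d2] .
  have sk: "shm C k \<in> hom C (sho C X) (sho C U1)" using k shm_hom by blast
  have sf: "shm C f \<in> hom C (sho C U1) (sho C X)" using t shm_hom by blast
  have "cmp C (ngt C (shm C k)) dl = zer C Y (sho C U1)" using CZ[OF rot[OF d3]] .
  then have "ngt C (cmp C (shm C k) dl) = zer C Y (sho C U1)" using cmp_ngt_l sk t2 by metis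
  then have skd: "cmp C (shm C k) dl = zer C Y (sho C U1)" using ngt_ngt ngt_zer comp sk t2 o sho_obj by metis
  have "dl = cmp C (idm C (sho C X)) dl" using idl t2 by metis
  also have "\<dots> = cmp C (shm C (cmp C f k)) dl" using k x shm_id by metis
  also have "\<dots> = cmp C (shm C f) (cmp C (shm C k) dl)" using shm_cmp[OF k(1) t(1)] assoc[OF t2(2) sk sf] by metis
  also have "\<dots> = zer C Y (sho C X)" using skd cmp_zer_r sf o by metis
  finally have dl0: "dl = zer C Y (sho C X)" .
  have kf: "cmp C k f \<in> hom C U1 U1" using k t comp by blast
  define e where "e = pls C (idm C U1) (ngt C (cmp C k f))"
  have e: "e \<in> hom C U1 U1" unfolding e_def using kf idm o plsh ngth by blast
  have kfk: "cmp C (cmp C k f) k = k" using assoc k t idr by metis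
  have "cmp C e k = pls C k (ngt C k)"
    unfolding e_def using distr idm[OF o(1)] ngth[OF kf] k cmp_ngt_l[OF kf k(1)] kfk idl by metis
  then have ek: "cmp C e k = zer C X U1" using pls_ngt k by metis
  obtain i2 where i2: "i2 \<in> hom C Y U1" "e = cmp C i2 p" using WC[OF d2 e ek] by blast
  have pk: "cmp C p k = zer C X Y" using CZ[OF d2] .
  have fe: "cmp C f e = zer C U1 X"
  proof -
    have "cmp C f e = pls C (cmp C f (idm C U1)) (cmp C f (ngt C (cmp C k f)))"
      unfolding e_def using distl idm[OF o(1)] ngth[OF kf] t by blast
    also have "cmp C f (ngt C (cmp C k f)) = ngt C (cmp C f (cmp C k f))" using cmp_ngt_r t kf by blast
    also have "cmp C f (cmp C k f) = f" using assoc[of f U1 X k U1 f X] t k idl by metis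
    finally show ?thesis using idr t pls_ngt by metis
  qed
  have fi2: "cmp C f i2 \<in> hom C Y X" using comp i2 t by blast
  have "cmp C (cmp C f i2) p = zer C U1 X" using fe i2 assoc t t2 by metis
  then obtain n where n: "n \<in> hom C (sho C X) X" "cmp C f i2 = cmp C n dl" using WC[OF d3 fi2] by blast
  have fi0: "cmp C f i2 = zer C Y X" using n dl0 cmp_zer_r o by metis
  have pi2: "cmp C p i2 \<in> hom C Y Y" using comp i2 t2 by blast
  define D2 where "D2 = pls C (cmp C p i2) (ngt C (idm C Y))"
  have D2: "D2 \<in> hom C Y Y" unfolding D2_def using pi2 idm o plsh ngth by blast
  have pe: "cmp C p e = p"
  proof -
    have "cmp C p e = pls C (cmp C p (idm C U1)) (cmp C p (ngt C (cmp C k f)))"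
      unfolding e_def using distl idm[OF o(1)] ngth[OF kf] t2 by blast
    also have "cmp C p (ngt C (cmp C k f)) = ngt C (cmp C p (cmp C k f))" using cmp_ngt_r t2 kf by blast
    also have "cmp C p (cmp C k f) = zer C U1 Y" using assoc[of f U1 X k U1 p Y] t k t2 pk cmp_zer_l o by metis
    finally show ?thesis using idr t2 ngt_zer pls_0 o by metis
  qed
  have "cmp C D2 p = pls C (cmp C (cmp C p i2) p) (cmp C (ngt C (idm C Y)) p)"
    unfolding D2_def using distr pi2 ngth idm o t2 by metis
  also have "cmp C (cmp C p i2) p = p" using assoc[of p U1 Y i2 U1 p Y] t2 i2 pe by metis
  also have "cmp C (ngt C (idm C Y)) p = ngt C p" using cmp_ngt_l idm o t2 idl by metis
  finally have "cmp C D2 p = zer C U1 Y" using pls_ngt t2 by metis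
  then obtain n2 where n2: "n2 \<in> hom C (sho C X) Y" "D2 = cmp C n2 dl" using WC[OF d3 D2] by blast
  have "D2 = zer C Y Y" using n2 dl0 cmp_zer_r o by metis
  then have pi: "cmp C p i2 = idm C Y" using sub_zero_eq pi2 idm o unfolding D2_def by metis
  have sum: "pls C (cmp C k f) (cmp C i2 p) = idm C U1"
  proof -
    have "pls C (cmp C k f) (cmp C i2 p) = pls C (cmp C k f) (pls C (idm C U1) (ngt C (cmp C k f)))"
      using i2 e_def by metis
    also have "\<dots> = pls C (idm C U1) (pls C (cmp C k f) (ngt C (cmp C k f)))"
    proof -
      have i: "idm C U1 \<in> hom C U1 U1" using idm o by blast
      have nk: "ngt C (cmp C k f) \<in> hom C U1 U1" using ngth kf by blast
      have "pls C (cmp C k f) (pls C (idm C U1) (ngt C (cmp C k f))) = pls C (pls C (cmp C k f) (idm C U1)) (ngt C (cmp C k f))"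
        using pls_assoc[OF kf i nk] by metis
      also have "pls C (cmp C k f) (idm C U1) = pls C (idm C U1) (cmp C k f)" using pls_comm kf i by blast
      also have "pls C (pls C (idm C U1) (cmp C k f)) (ngt C (cmp C k f)) = pls C (idm C U1) (pls C (cmp C k f) (ngt C (cmp C k f)))"
        using pls_assoc[OF i kf nk] by metis
      finally show ?thesis .
    qed
    finally show ?thesis using pls_ngt kf pls_0 idm o by metis
  qed
  have bp: "biproduct C X Y U1 k i2 f p"
    unfolding biproduct_def using o k t t2 i2 fi0 pk pi sum by metis
  then show ?thesis using full_bip[OF fU bp] d(1) by blast
qed

lemma hv_down: "S' \<in> shift_down C S \<Longrightarrow> T0 \<in> T \<Longrightarrow> hom C S' T0 = {zer C S' T0}"
proof -
  assume s: "S' \<in> shift_down C S" and t: "T0 \<in> T"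
  have so: "S' \<in> obj C" "sho C S' \<in> S" using s by (auto simp: shift_down_def)
  have to: "T0 \<in> obj C" using t full_obj fT by blast
  have "sho C T0 \<in> shift_up C T" unfolding shift_up_def isomorphic_def
    using t to sho_obj iso_id by blast
  then have h1: "hom C (sho C S') (sho C T0) = {zer C (sho C S') (sho C T0)}" using hv[OF hvST so(2)] by blast
  have "\<And>m. m \<in> hom C S' T0 \<Longrightarrow> m = zer C S' T0"
  proof -
    fix m assume m: "m \<in> hom C S' T0"
    have z: "zer C S' T0 \<in> hom C S' T0" using zer so to by blast
    have "shm C m \<in> hom C (sho C S') (sho C T0)" "shm C (zer C S' T0) \<in> hom C (sho C S') (sho C T0)"
      using shm_hom m z by blast+
    then have "shm C m = shm C (zer C S' T0)" using h1 by auto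
    then show "m = zer C S' T0" using shm_inj m z by blast
  qed
  then show ?thesis using zer so to by blast
qed


lemma shift_up_E: "Y \<in> shift_up C A \<Longrightarrow> \<exists>X \<in> A. \<exists>c ci. c \<in> hom C Y (sho C X) \<and> ci \<in> hom C (sho C X) Y \<and>
     cmp C ci c = idm C Y \<and> cmp C c ci = idm C (sho C X)"
  unfolding shift_up_def isomorphic_def is_iso_def by blast
lemma shift_up_obj: "Y \<in> shift_up C A \<Longrightarrow> Y \<in> obj C"
  unfolding shift_up_def by blast

lemma transport3:
  assumes d: "(X,Y,Z,f,g,h) \<in> dist C"
    and c: "c \<in> hom C Z Z'" "ci \<in> hom C Z' Z" "cmp C ci c = idm C Z" "cmp C c ci = idm C Z'"
  shows "(X, Y, Z', f, cmp C c g, cmp C h ci) \<in> dist C"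
proof -
  have t: "f \<in> hom C X Y" "g \<in> hom C Y Z" using dist_tri[OF d] by auto
  have y: "Y \<in> obj C" using t hom_obj by blast
  have i: "idm C Y \<in> hom C Y Y" "cmp C (idm C Y) (idm C Y) = idm C Y" using idm[OF y] idl by auto
  have "(X, Y, Z', cmp C (idm C Y) f, cmp C (cmp C c g) (idm C Y), cmp C h ci) \<in> dist C"
    using transport[OF d i(1) i(1) i(2) i(2) c] .
  then show ?thesis using idl idr t c comp by metis
qed

lemma U_Cm: assumes P: "P \<in> U" shows "P \<in> tcp_Cminus C S T U"
proof -
  have po: "P \<in> obj C" using P full_obj fU by blast
  obtain S1 T1' f g h where d: "S1 \<in> S" "T1' \<in> shift_up C T" "(S1, sho C P, T1', f, g, h) \<in> dist C"
    using sho_obj[OF po] objST ext_E by blast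
  obtain T1 psi psii where T1: "T1 \<in> T" "psi \<in> hom C T1' (sho C T1)" "psii \<in> hom C (sho C T1) T1'"
     "cmp C psii psi = idm C T1'" "cmp C psi psii = idm C (sho C T1)" using shift_up_E[OF d(2)] by blast
  have t1o: "T1 \<in> obj C" using T1(1) full_obj fT by blast
  have d1: "(S1, sho C P, sho C T1, f, cmp C psi g, cmp C h psii) \<in> dist C"
    using transport3[OF d(3) T1(2-5)] .
  obtain t0 where t0: "t0 \<in> hom C T1 S1" "(T1, S1, sho C P, t0, f, cmp C psi g) \<in> dist C"
    using rot_back[OF d1 t1o] by blast
  obtain p where p: "p \<in> hom C P T1" "(P, T1, S1, p, t0, f) \<in> dist C"
    using rot_back[OF t0(2) po] by blast
  have s1o: "S1 \<in> obj C" using d(1) full_obj fS by blast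
  obtain S' where S': "S' \<in> obj C" "isomorphic C (sho C S') S1" using ess_surj[OF s1o] by blast
  obtain chi where chi: "is_iso C (sho C S') S1 chi" using S'(2) unfolding isomorphic_def by blast
  obtain chii where chii: "chii \<in> hom C S1 (sho C S')" "cmp C chii chi = idm C (sho C S')"
      "cmp C chi chii = idm C S1" "is_iso C S1 (sho C S') chii" using iso_inv[OF chi] by blast
  have ch: "chi \<in> hom C (sho C S') S1" using chi iso_hom by blast
  have d2: "(P, T1, sho C S', p, cmp C chii t0, cmp C f chi) \<in> dist C"
    using transport3[OF p(2) chii(1) ch chii(3) chii(2)] .
  obtain s where s: "s \<in> hom C S' P" "(S', P, T1, s, p, cmp C chii t0) \<in> dist C"
    using rot_back[OF d2 S'(1)] by blast
  have "isomorphic C S1 (sho C S')" using chii(4) unfolding isomorphic_def by blast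
  then have sS: "sho C S' \<in> S" using full_iso[OF fS d(1) sho_obj[OF S'(1)]] by blast
  have S'd: "S' \<in> shift_down C S" using S'(1) sS by (simp add: shift_down_def)
  have T1U: "T1 \<in> U"
  proof (rule perpU[OF t1o])
    fix V' assume v: "V' \<in> shift_up C V"
    have vo: "V' \<in> obj C" using v shift_up_obj by blast
    have "\<And>m. m \<in> hom C T1 V' \<Longrightarrow> m = zer C T1 V'"
    proof -
      fix m assume m: "m \<in> hom C T1 V'"
      have "cmp C m p \<in> hom C P V'" using m p comp by blast
      then have "cmp C m p = zer C P V'" using hv[OF hvUV P v] by blast
      then obtain n where n: "n \<in> hom C S1 V'" "m = cmp C n t0" using WC[OF p(2) m] by blast
      have "n = zer C S1 V'" using n hv[OF hvSV d(1) v] by blast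
      then show "m = zer C T1 V'" using n t0 cmp_zer_l vo by metis
    qed
    then show "hom C T1 V' = {zer C T1 V'}" using zer t1o vo by blast
  qed
  have "T1 \<in> tcp_W U T" using T1U T1(1) W_iff by blast
  then show ?thesis unfolding tcp_Cminus_def using ext_I[OF po S'd _ s(2)] by blast
qed

lemma M2: assumes P: "P \<in> U" and B: "B0 \<in> tcp_Cplus C T U V" and m: "m \<in> hom C P B0"
  shows "factors_through C (tcp_W U T) P B0 m"
proof -
  obtain W1 V1 i j k where d: "W1 \<in> tcp_W U T" "V1 \<in> shift_up C V" "(W1, B0, V1, i, j, k) \<in> dist C"
    using B unfolding tcp_Cplus_def using ext_E by blast
  have t: "i \<in> hom C W1 B0" "j \<in> hom C B0 V1" using dist_tri[OF d(3)] by auto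
  have "cmp C j m \<in> hom C P V1" using m t comp by blast
  then have "cmp C j m = zer C P V1" using hv[OF hvUV P d(2)] by blast
  then obtain n where n: "n \<in> hom C P W1" "m = cmp C i n" using WK[OF d(3) m] by blast
  show ?thesis using ft_I[OF d(1) n(1) t(1)] n(2) by metis
qed


lemma HP:
  assumes d: "(U0, X, T0, a, b, c) \<in> dist C" and w: "w \<in> hom C W0 T0"
  shows "\<exists>P j pp q. (U0, P, W0, j, pp, cmp C c w) \<in> dist C \<and> q \<in> hom C P X \<and>
           cmp C q j = a \<and> cmp C b q = cmp C w pp"
proof -
  have t: "a \<in> hom C U0 X" "b \<in> hom C X T0" "c \<in> hom C T0 (sho C U0)" using dist_tri[OF d] by auto
  have o: "U0 \<in> obj C" "X \<in> obj C" "T0 \<in> obj C" "W0 \<in> obj C" using t w hom_obj by auto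
  have cw: "cmp C c w \<in> hom C W0 (sho C U0)" using t w comp by blast
  obtain Q i1 i2 where dq: "(W0, sho C U0, Q, cmp C c w, i1, i2) \<in> dist C" using exist_tri[OF cw] by blast
  have ti: "i1 \<in> hom C (sho C U0) Q" "i2 \<in> hom C Q (sho C W0)" using dist_tri[OF dq] by auto
  have qo: "Q \<in> obj C" using ti hom_obj by blast
  obtain P0 where P0: "P0 \<in> obj C" "isomorphic C (sho C P0) Q" using ess_surj[OF qo] by blast
  obtain phi where phi: "is_iso C (sho C P0) Q phi" using P0(2) unfolding isomorphic_def by blast
  obtain phii where phii: "phii \<in> hom C Q (sho C P0)" "cmp C phii phi = idm C (sho C P0)"
      "cmp C phi phii = idm C Q" using iso_inv[OF phi] by blast
  have ph: "phi \<in> hom C (sho C P0) Q" using phi iso_hom by blast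
  have d1: "(W0, sho C U0, sho C P0, cmp C c w, cmp C phii i1, cmp C i2 phi) \<in> dist C"
    using transport3[OF dq phii(1) ph phii(3) phii(2)] .
  obtain pp where pp: "pp \<in> hom C P0 W0" "(P0, W0, sho C U0, pp, cmp C c w, cmp C phii i1) \<in> dist C"
    using rot_back[OF d1 P0(1)] by blast
  obtain j where j: "j \<in> hom C U0 P0" "(U0, P0, W0, j, pp, cmp C c w) \<in> dist C"
      "ngt C (shm C j) = cmp C phii i1"
    using rot_back[OF pp(2) o(1)] by blast
  have r1: "(W0, sho C U0, sho C P0, cmp C c w, cmp C phii i1, ngt C (shm C pp)) \<in> dist C"
    using rot[OF pp(2)] .
  have r2: "(T0, sho C U0, sho C X, c, ngt C (shm C a), ngt C (shm C b)) \<in> dist C"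
    using rot[OF rot[OF d]] .
  have so: "sho C U0 \<in> obj C" using sho_obj o by blast
  have cond: "cmp C (idm C (sho C U0)) (cmp C c w) = cmp C c w" using idl cw by blast
  obtain z where z: "z \<in> hom C (sho C P0) (sho C X)"
      "cmp C z (cmp C phii i1) = cmp C (ngt C (shm C a)) (idm C (sho C U0))"
      "cmp C (shm C w) (ngt C (shm C pp)) = cmp C (ngt C (shm C b)) z"
    using TR3[OF r1 r2 w idm[OF so] cond] by blast
  obtain q where q: "q \<in> hom C P0 X" "shm C q = z" using shm_surj[OF z(1) P0(1) o(2)] by blast
  have sa: "shm C a \<in> hom C (sho C U0) (sho C X)" using t shm_hom by blast
  have sb: "shm C b \<in> hom C (sho C X) (sho C T0)" using t shm_hom by blast
  have sj: "shm C j \<in> hom C (sho C U0) (sho C P0)" using j shm_hom by blast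
  have sp: "shm C pp \<in> hom C (sho C P0) (sho C W0)" using pp shm_hom by blast
  have sw: "shm C w \<in> hom C (sho C W0) (sho C T0)" using w shm_hom by blast
  have pi1: "cmp C phii i1 \<in> hom C (sho C U0) (sho C P0)" using phii ti comp by blast
  have z2: "cmp C z (cmp C phii i1) = ngt C (shm C a)" using z(2) idr sa ngth by metis
  have sj2: "shm C j = ngt C (cmp C phii i1)" using j(3) sj ngt_ngt by metis
  have "shm C (cmp C q j) = cmp C z (shm C j)" using shm_cmp j q by metis
  also have "\<dots> = ngt C (cmp C z (cmp C phii i1))" using sj2 cmp_ngt_r z(1) pi1 by metis
  also have "\<dots> = shm C a" using z2 ngt_ngt sa by metis
  finally have qj: "cmp C q j = a" using shm_inj comp j q t by metis
  have "ngt C (cmp C (shm C w) (shm C pp)) = ngt C (cmp C (shm C b) z)"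
    using z(3) cmp_ngt_r[OF sw sp] cmp_ngt_l[OF sb z(1)] by metis
  then have "cmp C (shm C w) (shm C pp) = cmp C (shm C b) z" using ngt_ngt comp sw sp sb z(1) by metis
  then have "shm C (cmp C w pp) = shm C (cmp C b q)" using shm_cmp pp w q t by metis
  then have bq: "cmp C b q = cmp C w pp" using shm_inj comp pp w q t by metis
  show ?thesis using j(2) q(1) qj bq by blast
qed

lemma F:
  assumes A: "A \<in> tcp_Cminus C S T U" and M: "M \<in> ext C U T" and g: "g \<in> hom C A M"
  shows "\<exists>P1 l1 q1 P2 l2 q2. P1 \<in> U \<and> P2 \<in> U \<and> l1 \<in> hom C A P1 \<and> q1 \<in> hom C P1 M \<and>
     l2 \<in> hom C A P2 \<and> q2 \<in> hom C P2 M \<and> g = pls C (cmp C q1 l1) (cmp C q2 l2)"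
proof -
  obtain S' W0 s r t where dA: "S' \<in> shift_down C S" "W0 \<in> tcp_W U T" "(S', A, W0, s, r, t) \<in> dist C"
    using A unfolding tcp_Cminus_def using ext_E by blast
  obtain U0 T0 a b c where dM: "U0 \<in> U" "T0 \<in> T" "(U0, M, T0, a, b, c) \<in> dist C"
    using M ext_E by blast
  have tA: "s \<in> hom C S' A" "r \<in> hom C A W0" using dist_tri[OF dA(3)] by auto
  have tM: "a \<in> hom C U0 M" "b \<in> hom C M T0" "c \<in> hom C T0 (sho C U0)" using dist_tri[OF dM(3)] by auto
  have o: "A \<in> obj C" "M \<in> obj C" "U0 \<in> obj C" "W0 \<in> obj C" "T0 \<in> obj C" using tA tM g hom_obj by auto
  have bg: "cmp C b g \<in> hom C A T0" using g tM comp by blast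
  have "cmp C (cmp C b g) s \<in> hom C S' T0" using bg tA comp by blast
  then have "cmp C (cmp C b g) s = zer C S' T0" using hv_down[OF dA(1) dM(2)] by blast
  then obtain w where w: "w \<in> hom C W0 T0" "cmp C b g = cmp C w r" using WC[OF dA(3) bg] by blast
  obtain P j pp q where H: "(U0, P, W0, j, pp, cmp C c w) \<in> dist C" "q \<in> hom C P M"
      "cmp C q j = a" "cmp C b q = cmp C w pp" using HP[OF dM(3) w(1)] by blast
  have tH: "j \<in> hom C U0 P" "pp \<in> hom C P W0" using dist_tri[OF H(1)] by auto
  have po: "P \<in> obj C" using tH hom_obj by blast
  have cb: "cmp C c b = zer C M (sho C U0)" using CZ[OF rot[OF dM(3)]] .
  have "cmp C (cmp C c w) r = cmp C c (cmp C w r)" using assoc tA w tM by metis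
  also have "\<dots> = cmp C (cmp C c b) g" using w(2) assoc g tM by metis
  also have "\<dots> = zer C A (sho C U0)" using cb cmp_zer_l g sho_obj o by metis
  finally obtain l where l: "l \<in> hom C A P" "r = cmp C pp l" using WK[OF rot[OF H(1)] tA(2)] by blast
  have ql: "cmp C q l \<in> hom C A M" using l H comp by blast
  define D where "D = pls C g (ngt C (cmp C q l))"
  have D: "D \<in> hom C A M" unfolding D_def using g ql plsh ngth by blast
  have bql: "cmp C b (cmp C q l) = cmp C w r"
  proof -
    have "cmp C b (cmp C q l) = cmp C (cmp C b q) l" using assoc l H tM by metis
    also have "\<dots> = cmp C w (cmp C pp l)" using H(4) assoc l tH w by metis
    finally show ?thesis using l by metis
  qed
  have "cmp C b D = pls C (cmp C b g) (cmp C b (ngt C (cmp C q l)))"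
    unfolding D_def using distl g ngth[OF ql] tM by blast
  also have "cmp C b (ngt C (cmp C q l)) = ngt C (cmp C w r)" using cmp_ngt_r tM ql bql by metis
  finally have "cmp C b D = zer C A T0" using w(2) pls_ngt bg by metis
  then obtain l' where l': "l' \<in> hom C A U0" "D = cmp C a l'" using WK[OF dM(3) D] by blast
  have geq: "g = pls C (cmp C q l) D"
  proof -
    have n: "ngt C (cmp C q l) \<in> hom C A M" using ngth ql by blast
    have "pls C (cmp C q l) D = pls C D (cmp C q l)" using pls_comm ql D by blast
    also have "\<dots> = pls C g (pls C (ngt C (cmp C q l)) (cmp C q l))" unfolding D_def using pls_assoc g n ql by blast
    also have "pls C (ngt C (cmp C q l)) (cmp C q l) = zer C A M" using pls_comm pls_ngt n ql by metis
    finally show ?thesis using pls_0 g by metis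
  qed
  have PU: "P \<in> U"
  proof (rule perpU[OF po])
    fix V' assume v: "V' \<in> shift_up C V"
    have vo: "V' \<in> obj C" using v shift_up_obj by blast
    have "\<And>m. m \<in> hom C P V' \<Longrightarrow> m = zer C P V'"
    proof -
      fix m assume m: "m \<in> hom C P V'"
      have "cmp C m j \<in> hom C U0 V'" using m tH comp by blast
      then have "cmp C m j = zer C U0 V'" using hv[OF hvUV dM(1) v] by blast
      then obtain n where n: "n \<in> hom C W0 V'" "m = cmp C n pp" using WC[OF H(1) m] by blast
      have "W0 \<in> U" using dA(2) W_iff by blast
      then have "n = zer C W0 V'" using n hv[OF hvUV _ v] by blast
      then show "m = zer C P V'" using n tH cmp_zer_l vo by metis
    qed
    then show "hom C P V' = {zer C P V'}" using zer po vo by blast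
  qed
  show ?thesis using PU dM(1) l(1) H(2) l'(1) tM(1) geq l'(2) by blast
qed


lemma cor_D: "coreflection C W D X A e \<Longrightarrow> A \<in> D \<and> e \<in> hom C A X \<and>
     (\<forall>Y \<in> D. \<forall>g \<in> hom C Y X. \<exists>p \<in> hom C Y A. qeq C W Y X (cmp C e p) g) \<and>
     (\<forall>Y \<in> D. \<forall>p \<in> hom C Y A. \<forall>p' \<in> hom C Y A.
        qeq C W Y X (cmp C e p) (cmp C e p') \<longrightarrow> qeq C W Y A p p')"
  by (simp add: coreflection_def)
lemma ref_D: "reflection C W D X B u \<Longrightarrow> B \<in> D \<and> u \<in> hom C X B \<and>
     (\<forall>Y \<in> D. \<forall>g \<in> hom C X Y. \<exists>p \<in> hom C B Y. qeq C W X Y (cmp C p u) g) \<and>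
     (\<forall>Y \<in> D. \<forall>p \<in> hom C B Y. \<forall>p' \<in> hom C B Y.
        qeq C W X Y (cmp C p u) (cmp C p' u) \<longrightarrow> qeq C W B Y p p')"
  by (simp add: reflection_def)

lemma main2:
  assumes M: "M \<in> ext C U T" and a': "a' \<in> hom C X M" and b': "b' \<in> hom C M Y" and f: "f = cmp C b' a'"
    and HX: "H_value C S T U V X AX eX BX uX" and HY: "H_value C S T U V Y AY eY BY uY"
    and psi: "psi \<in> hom C AX AY" and q1: "qeq C (tcp_W U T) AX Y (cmp C eY psi) (cmp C f eX)"
    and phi: "phi \<in> hom C BX BY" and q2: "qeq C (tcp_W U T) AX BY (cmp C phi uX) (cmp C uY psi)"
  shows "qeq C (tcp_W U T) BX BY phi (zer C BX BY)"
proof -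
  note cX = cor_D[OF HX[unfolded H_value_def, THEN conjunct1]]
  note rX = ref_D[OF HX[unfolded H_value_def, THEN conjunct2]]
  note cY = cor_D[OF HY[unfolded H_value_def, THEN conjunct1]]
  note rY = ref_D[OF HY[unfolded H_value_def, THEN conjunct2]]
  have AX: "AX \<in> tcp_Cminus C S T U" "eX \<in> hom C AX X" using cX by auto
  have BX: "BX \<in> tcp_Cplus C T U V" "uX \<in> hom C AX BX" using rX by auto
  have AY: "AY \<in> tcp_Cminus C S T U" "eY \<in> hom C AY Y" using cY by auto
  have BY: "BY \<in> tcp_Cplus C T U V" "uY \<in> hom C AY BY" using rY by auto
  have g: "cmp C a' eX \<in> hom C AX M" using a' AX comp by blast
  obtain P1 l1 q1 P2 l2 q2 where FF: "P1 \<in> U" "P2 \<in> U" "l1 \<in> hom C AX P1" "q1 \<in> hom C P1 M"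
     "l2 \<in> hom C AX P2" "q2 \<in> hom C P2 M" "cmp C a' eX = pls C (cmp C q1 l1) (cmp C q2 l2)"
    using F[OF AX(1) M g] by blast
  have bq1: "cmp C b' q1 \<in> hom C P1 Y" using b' FF comp by blast
  have bq2: "cmp C b' q2 \<in> hom C P2 Y" using b' FF comp by blast
  obtain p1 where p1: "p1 \<in> hom C P1 AY" "qeq C (tcp_W U T) P1 Y (cmp C eY p1) (cmp C b' q1)"
    using cY U_Cm[OF FF(1)] bq1 by blast
  obtain p2 where p2: "p2 \<in> hom C P2 AY" "qeq C (tcp_W U T) P2 Y (cmp C eY p2) (cmp C b' q2)"
    using cY U_Cm[OF FF(2)] bq2 by blast
  have pl1: "cmp C p1 l1 \<in> hom C AX AY" using p1 FF comp by blast
  have pl2: "cmp C p2 l2 \<in> hom C AX AY" using p2 FF comp by blast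
  define psi' where "psi' = pls C (cmp C p1 l1) (cmp C p2 l2)"
  have psi': "psi' \<in> hom C AX AY" unfolding psi'_def using pl1 pl2 plsh by blast
  have e1: "cmp C eY psi' = pls C (cmp C (cmp C eY p1) l1) (cmp C (cmp C eY p2) l2)"
    unfolding psi'_def using distl[OF pl1 pl2 AY(2)] assoc[OF FF(3) p1(1) AY(2)] assoc[OF FF(5) p2(1) AY(2)] by simp
  have qa: "qeq C (tcp_W U T) AX Y (cmp C (cmp C eY p1) l1) (cmp C (cmp C b' q1) l1)"
    using qeq_right[OF p1(2) FF(3)] .
  have qb: "qeq C (tcp_W U T) AX Y (cmp C (cmp C eY p2) l2) (cmp C (cmp C b' q2) l2)"
    using qeq_right[OF p2(2) FF(5)] .
  have ql1: "cmp C q1 l1 \<in> hom C AX M" "cmp C q2 l2 \<in> hom C AX M" using FF comp by blast+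
  have "pls C (cmp C (cmp C b' q1) l1) (cmp C (cmp C b' q2) l2) = cmp C b' (cmp C a' eX)"
    using FF(7) distl[OF ql1 b'] assoc[OF FF(3) FF(4) b'] assoc[OF FF(5) FF(6) b'] by simp
  also have "\<dots> = cmp C f eX" using f assoc[OF AX(2) a' b'] by simp
  finally have "qeq C (tcp_W U T) AX Y (cmp C eY psi') (cmp C f eX)"
    using e1 qeq_pls[OF qa qb] by metis
  then have "qeq C (tcp_W U T) AX Y (cmp C eY psi') (cmp C eY psi)"
    using qeq_trans qeq_sym q1 by blast
  then have qp: "qeq C (tcp_W U T) AX AY psi' psi" using cY AX(1) psi' psi by blast
  have qu: "qeq C (tcp_W U T) AX BY (cmp C uY psi) (cmp C uY psi')"
    using qeq_sym[OF qeq_left[OF qp BY(2)]] .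
  have up1: "cmp C uY p1 \<in> hom C P1 BY" "cmp C uY p2 \<in> hom C P2 BY" using BY p1 p2 comp by blast+
  have "cmp C uY psi' = pls C (cmp C (cmp C uY p1) l1) (cmp C (cmp C uY p2) l2)"
    unfolding psi'_def using distl[OF pl1 pl2 BY(2)] assoc[OF FF(3) p1(1) BY(2)] assoc[OF FF(5) p2(1) BY(2)] by simp
  moreover have "factors_through C (tcp_W U T) AX BY (pls C (cmp C (cmp C uY p1) l1) (cmp C (cmp C uY p2) l2))"
    using ft_pls ft_right M2 FF up1 BY(1) by metis
  ultimately have "factors_through C (tcp_W U T) AX BY (cmp C uY psi')" by simp
  then have "factors_through C (tcp_W U T) AX BY (cmp C phi uX)" using ft_qeq qu q2 by blast
  then have "qeq C (tcp_W U T) AX BY (cmp C phi uX) (zer C AX BY)" using qeq_zero comp BX phi by blast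
  moreover have "cmp C (zer C BX BY) uX = zer C AX BY" using cmp_zer_l BX phi hom_obj by blast
  ultimately have "qeq C (tcp_W U T) AX BY (cmp C phi uX) (cmp C (zer C BX BY) uX)" by simp
  then show ?thesis using rX BY(1) phi zer hom_obj by metis
qed

lemma main1:
  assumes X: "X \<in> ext C U T" and H: "H_value C S T U V X A e B u"
  shows "zero_in_quotient C (tcp_W U T) B"
proof -
  note c = cor_D[OF H[unfolded H_value_def, THEN conjunct1]]
  note r = ref_D[OF H[unfolded H_value_def, THEN conjunct2]]
  have e: "e \<in> hom C A X" and u: "u \<in> hom C A B" using c r by auto
  have xo: "X \<in> obj C" and ao: "A \<in> obj C" and bo: "B \<in> obj C" using e u hom_obj by auto
  have i: "idm C X \<in> hom C X X" using idm xo by blast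
  have q1: "qeq C (tcp_W U T) A X (cmp C e (idm C A)) (cmp C (cmp C (idm C X) (idm C X)) e)"
    using qeq_refl e idl idr i by metis
  have q2: "qeq C (tcp_W U T) A B (cmp C (idm C B) u) (cmp C u (idm C A))"
    using qeq_refl u idl idr by metis
  have "qeq C (tcp_W U T) B B (idm C B) (zer C B B)"
    using main2[OF X i i refl H H idm[OF ao] q1 idm[OF bo] q2] .
  then show ?thesis unfolding zero_in_quotient_def using qeq_zero idm bo by blast
qed

lemma U_ext: "X \<in> U \<Longrightarrow> X \<in> ext C U T"
proof -
  assume x: "X \<in> U"
  have xo: "X \<in> obj C" using x full_obj fU by blast
  obtain Zr where z: "zero_obj C Zr" using zero_ex by blast
  have "Zr \<in> T" using full_zero fT z by blast
  then show ?thesis using ext_I[OF xo x _ triv[OF xo z]] by blast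
qed

lemma T_ext: "X \<in> T \<Longrightarrow> X \<in> ext C U T"
proof -
  assume x: "X \<in> T"
  have xo: "X \<in> obj C" using x full_obj fT by blast
  obtain Zr where z: "zero_obj C Zr" using zero_ex by blast
  have zU: "Zr \<in> U" using full_zero fU z by blast
  obtain X1 where x1: "X1 \<in> obj C" "isomorphic C (sho C X1) X" using ess_surj[OF xo] by blast
  obtain phi where phi: "is_iso C (sho C X1) X phi" using x1(2) unfolding isomorphic_def by blast
  obtain phii where phii: "phii \<in> hom C X (sho C X1)" "cmp C phii phi = idm C (sho C X1)"
      "cmp C phi phii = idm C X" using iso_inv[OF phi] by blast
  have ph: "phi \<in> hom C (sho C X1) X" using phi iso_hom by blast
  have R: "(Zr, sho C X1, sho C X1, zer C Zr (sho C X1), ngt C (shm C (idm C X1)),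
            ngt C (shm C (zer C X1 Zr))) \<in> dist C"
    using rot[OF rot[OF triv[OF x1(1) z]]] .
  have "(Zr, X, X, cmp C phi (zer C Zr (sho C X1)), cmp C (cmp C phi (ngt C (shm C (idm C X1)))) phii,
         cmp C (ngt C (shm C (zer C X1 Zr))) phii) \<in> dist C"
    using transport[OF R ph phii(1) phii(2) phii(3) ph phii(1) phii(2) phii(3)] .
  then show ?thesis using ext_I[OF xo zU x] by blast
qed

end

theorem proposition2p18:
  fixes C :: "('o, 'm) tricat"
    and \<S> \<T> \<U> \<V> :: "'o set"
  assumes "triangulated_category C"
    and "twin_cotorsion_pair C \<S> \<T> \<U> \<V>"
  shows
    "(\<forall>X A e B u. X \<in> ext C \<U> \<T> \<and> H_value C \<S> \<T> \<U> \<V> X A e B u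
        \<longrightarrow> zero_in_quotient C (tcp_W \<U> \<T>) B)
     \<and> (\<forall>X Y f AX eX BX uX AY eY BY uY psi phi.
          (\<exists>M \<in> ext C \<U> \<T>. factors_through C {M} X Y f) \<and>
          H_value C \<S> \<T> \<U> \<V> X AX eX BX uX \<and> H_value C \<S> \<T> \<U> \<V> Y AY eY BY uY \<and>
          psi \<in> hom C AX AY \<and> qeq C (tcp_W \<U> \<T>) AX Y (cmp C eY psi) (cmp C f eX) \<and>
          phi \<in> hom C BX BY \<and> qeq C (tcp_W \<U> \<T>) AX BY (cmp C phi uX) (cmp C uY psi)
          \<longrightarrow> qeq C (tcp_W \<U> \<T>) BX BY phi (zer C BX BY))
     \<and> (\<forall>X A e B u. X \<in> \<U> \<and> H_value C \<S> \<T> \<U> \<V> X A e B u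
        \<longrightarrow> zero_in_quotient C (tcp_W \<U> \<T>) B)
     \<and> (\<forall>X A e B u. X \<in> \<T> \<and> H_value C \<S> \<T> \<U> \<V> X A e B u
        \<longrightarrow> zero_in_quotient C (tcp_W \<U> \<T>) B)"
proof -
  interpret twin C \<S> \<T> \<U> \<V>
    using assms by (simp add: twin_def tc_def twin_axioms_def)
  have p2: "\<forall>X Y f AX eX BX uX AY eY BY uY psi phi.
          (\<exists>M \<in> ext C \<U> \<T>. factors_through C {M} X Y f) \<and>
          H_value C \<S> \<T> \<U> \<V> X AX eX BX uX \<and> H_value C \<S> \<T> \<U> \<V> Y AY eY BY uY \<and>
          psi \<in> hom C AX AY \<and> qeq C (tcp_W \<U> \<T>) AX Y (cmp C eY psi) (cmp C f eX) \<and>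
          phi \<in> hom C BX BY \<and> qeq C (tcp_W \<U> \<T>) AX BY (cmp C phi uX) (cmp C uY psi)
          \<longrightarrow> qeq C (tcp_W \<U> \<T>) BX BY phi (zer C BX BY)"
  proof (intro allI impI)
    fix X Y f AX eX BX uX AY eY BY uY psi phi
    assume h: "(\<exists>M \<in> ext C \<U> \<T>. factors_through C {M} X Y f) \<and>
          H_value C \<S> \<T> \<U> \<V> X AX eX BX uX \<and> H_value C \<S> \<T> \<U> \<V> Y AY eY BY uY \<and>
          psi \<in> hom C AX AY \<and> qeq C (tcp_W \<U> \<T>) AX Y (cmp C eY psi) (cmp C f eX) \<and>
          phi \<in> hom C BX BY \<and> qeq C (tcp_W \<U> \<T>) AX BY (cmp C phi uX) (cmp C uY psi)"
    then obtain M a' b' where m: "M \<in> ext C \<U> \<T>" "a' \<in> hom C X M" "b' \<in> hom C M Y" "f = cmp C b' a'"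
      unfolding factors_through_def by blast
    show "qeq C (tcp_W \<U> \<T>) BX BY phi (zer C BX BY)" using main2[OF m] h by blast
  qed
  have p1: "\<forall>X A e B u. X \<in> ext C \<U> \<T> \<and> H_value C \<S> \<T> \<U> \<V> X A e B u
        \<longrightarrow> zero_in_quotient C (tcp_W \<U> \<T>) B" using main1 by blast
  have p3: "\<forall>X A e B u. X \<in> \<U> \<and> H_value C \<S> \<T> \<U> \<V> X A e B u
        \<longrightarrow> zero_in_quotient C (tcp_W \<U> \<T>) B" using main1 U_ext by blast
  have p4: "\<forall>X A e B u. X \<in> \<T> \<and> H_value C \<S> \<T> \<U> \<V> X A e B u
        \<longrightarrow> zero_in_quotient C (tcp_W \<U> \<T>) B" using main1 T_ext by blast
  show ?thesis using p1 p2 p3 p4 by (intro conjI)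
qed

end
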